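(* Let $n\ge1$, $\lambda\in\mathbb C$ with $s=\operatorname{Re}\lambda>0$, and $\alpha>0$. Let ${\bf w}^\alpha_\lambda(y)=(2\pi)^{-n/2}\Gamma(\alpha)^{-1}(1-|y|^2)^{\alpha-1}$ for $|y|<1$. Then $$\int_{|y|<1}{\bf w}^\alpha_\lambda(y)\,\|\delta_{\lambda,y}\|_{L^1(\mathbb R^n)}^2\,dy<\infty$$ if and only if $\alpha>\max\{2s-1,0\}$.
   Context: $|\cdot|$ is the Euclidean norm on $\mathbb R^n$, $dy$ Lebesgue measure; for $z\in\mathbb C^n$, $z^2=\sum_jz_j^2$; powers use the principal branch. ${\bf c}(\lambda)=\pi^{n/2}\Gamma(2\lambda)/\Gamma(\lambda+n/2)$ and $\delta_{\lambda,y}(x)={\bf c}(\lambda)^{-1}(1+(x+iy)^2)^{-(\lambda+n/2)}$ for $x\in\mathbb R^n$, $|y|<1$. *)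

theory Defs
  imports "HOL-Analysis.Analysis"
begin

text \<open>For x, y in R^n (n = DIM('a)): (x + i y)^2 = sum_j (x_j + i y_j)^2.\<close>
definition csq :: "'a::euclidean_space \<Rightarrow> 'a \<Rightarrow> complex" where
  "csq x y = (\<Sum>b\<in>Basis. (complex_of_real (x \<bullet> b) + \<i> * complex_of_real (y \<bullet> b))^2)"

definition cconst :: "nat \<Rightarrow> complex \<Rightarrow> complex" where
  "cconst n lam = complex_of_real (pi powr (real n / 2)) * Gamma (2 * lam)
                  / Gamma (lam + complex_of_real (real n / 2))"

definition delta :: "complex \<Rightarrow> 'a::euclidean_space \<Rightarrow> 'a \<Rightarrow> complex" where
  "delta lam y x = inverse (cconst DIM('a) lam)
      * (1 + csq x y) powr (- (lam + complex_of_real (real DIM('a) / 2)))"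

definition L1norm :: "('a::euclidean_space \<Rightarrow> complex) \<Rightarrow> ennreal" where
  "L1norm f = (\<integral>\<^sup>+ x. ennreal (norm (f x)) \<partial>lborel)"

definition wgt :: "real \<Rightarrow> 'a::euclidean_space \<Rightarrow> real" where
  "wgt \<alpha> y = (2 * pi) powr (- real DIM('a) / 2) / Gamma \<alpha> * (1 - norm y ^ 2) powr (\<alpha> - 1)"

end

theory Submission
  imports Defs
begin

lemma csq_eq:
  fixes x y :: "'a::euclidean_space"
  shows "csq x y = complex_of_real (norm x ^ 2 - norm y ^ 2) + \<i> * complex_of_real (2 * (x \<bullet> y))"
proof -
  have "csq x y = (\<Sum>b\<in>Basis. complex_of_real ((x\<bullet>b)^2 - (y\<bullet>b)^2) + \<i> * complex_of_real (2*((x\<bullet>b)*(y\<bullet>b))))"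
    unfolding csq_def by (intro sum.cong refl) (simp add: power2_eq_square algebra_simps)
  also have "\<dots> = complex_of_real (\<Sum>b\<in>Basis. (x\<bullet>b)^2 - (y\<bullet>b)^2) + \<i> * complex_of_real (2 * (\<Sum>b\<in>Basis. (x\<bullet>b)*(y\<bullet>b)))"
    by (simp add: sum.distrib sum_distrib_left)
  also have "(\<Sum>b\<in>Basis. (x\<bullet>b)^2 - (y\<bullet>b)^2) = norm x ^ 2 - norm y ^ 2"
  proof -
    have nx: "norm z ^ 2 = (\<Sum>b\<in>Basis. (z\<bullet>b)^2)" for z :: 'a
      by (metis (no_types, lifting) dot_square_norm euclidean_inner power2_eq_square sum.cong)
    show ?thesis by (simp add: sum_subtractf nx)
  qed
  also have "(\<Sum>b\<in>Basis. (x\<bullet>b)*(y\<bullet>b)) = x \<bullet> y"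
    by (simp add: euclidean_inner[of x y])
  finally show ?thesis .
qed

lemma Re_nonpos_Ints: "z \<in> \<int>\<^sub>\<le>\<^sub>0 \<Longrightarrow> Re z \<le> 0"
  by (auto elim!: nonpos_Ints_cases)

lemma cconst_nz:
  assumes "Re lam > 0"
  shows "cconst n lam \<noteq> 0"
proof -
  have "2 * lam \<notin> \<int>\<^sub>\<le>\<^sub>0" using assms
    using Re_nonpos_Ints[of "2*lam"] by auto
  moreover have "lam + complex_of_real (real n / 2) \<notin> \<int>\<^sub>\<le>\<^sub>0" using assms
    using Re_nonpos_Ints[of "lam + complex_of_real (real n / 2)"] by auto
  ultimately show ?thesis unfolding cconst_def
    by (simp add: Gamma_eq_zero_iff)
qed

lemma norm_delta:
  fixes y x :: "'a::euclidean_space"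
  defines "z \<equiv> 1 + csq x y"
  shows "norm (delta lam y x) = norm (inverse (cconst DIM('a) lam)) *
     (cmod z powr (- (Re lam + real DIM('a) / 2)) * exp (Im lam * Arg z))"
  unfolding delta_def z_def[symmetric] by (simp add: norm_mult norm_powr_complex)

lemma cmod_z_bounds:
  fixes y x :: "'a::euclidean_space"
  assumes "norm y < 1"
  defines "h \<equiv> (1 - norm y ^ 2) + norm x ^ 2 + 2 * \<bar>x \<bullet> y\<bar>"
  shows "cmod (1 + csq x y) \<le> h" "h / 2 \<le> cmod (1 + csq x y)" "0 < h"
proof -
  have ny: "norm y ^ 2 < 1" using assms(1) norm_ge_zero
    by (metis abs_norm_cancel abs_square_less_1)
  have Re: "Re (1 + csq x y) = (1 - norm y ^ 2) + norm x ^ 2" and Im: "Im (1 + csq x y) = 2 * (x \<bullet> y)"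
    by (simp_all add: csq_eq)
  show "cmod (1 + csq x y) \<le> h" using cmod_le[of "1 + csq x y"] unfolding Re Im h_def
    using ny by (simp add: abs_mult)
  show "h / 2 \<le> cmod (1 + csq x y)"
    using abs_Re_le_cmod[of "1 + csq x y"] abs_Im_le_cmod[of "1 + csq x y"] unfolding Re Im h_def
    using ny by (simp add: abs_mult)
  show "0 < h" unfolding h_def using ny by (smt (verit) zero_le_power2 abs_ge_zero)
qed

lemma delta_bounds:
  fixes y x :: "'a::euclidean_space"
  assumes "norm y < 1" "Re lam > 0"
  defines "h \<equiv> (1 - norm y ^ 2) + norm x ^ 2 + 2 * \<bar>x \<bullet> y\<bar>"
  defines "m \<equiv> Re lam + real DIM('a) / 2"
  defines "K \<equiv> norm (inverse (cconst DIM('a) lam))"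
  shows "K * exp (- pi * \<bar>Im lam\<bar>) * h powr (-m) \<le> norm (delta lam y x)"
    "norm (delta lam y x) \<le> K * exp (pi * \<bar>Im lam\<bar>) * 2 powr m * h powr (-m)"
proof -
  let ?z = "1 + csq x y"
  have b: "cmod ?z \<le> h" "h / 2 \<le> cmod ?z" "0 < h"
    using cmod_z_bounds[OF assms(1), of x] unfolding h_def by auto
  have m: "m > 0" unfolding m_def using assms(2) by auto
  have K: "K \<ge> 0" unfolding K_def by simp
  have aA: "\<bar>Arg ?z\<bar> \<le> pi" using mpi_less_Arg[of ?z] Arg_le_pi[of ?z] by auto
  have ab: "\<bar>Im lam * Arg ?z\<bar> \<le> pi * \<bar>Im lam\<bar>"
    unfolding abs_mult using aA by (metis abs_ge_zero mult.commute mult_left_mono)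
  have e1: "exp (- pi * \<bar>Im lam\<bar>) \<le> exp (Im lam * Arg ?z)"
    using ab by (simp add: abs_le_iff)
  have e2: "exp (Im lam * Arg ?z) \<le> exp (pi * \<bar>Im lam\<bar>)"
    using ab by (simp add: abs_le_iff)
  have p1: "h powr (-m) \<le> cmod ?z powr (-m)"
    by (rule powr_mono2') (use m b in auto)
  have p2: "cmod ?z powr (-m) \<le> (h/2) powr (-m)"
    by (rule powr_mono2') (use m b in auto)
  have p2': "(h/2) powr (-m) = 2 powr m * h powr (-m)"
    by (simp add: powr_divide powr_minus divide_simps)
  have nd: "norm (delta lam y x) = K * (cmod ?z powr (-m) * exp (Im lam * Arg ?z))"
    unfolding K_def m_def by (rule norm_delta)
  have l1: "exp (- pi * \<bar>Im lam\<bar>) * h powr (-m) \<le> exp (Im lam * Arg ?z) * cmod ?z powr (-m)"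
    by (rule mult_mono[OF e1 p1]) auto
  have l2: "exp (Im lam * Arg ?z) * cmod ?z powr (-m) \<le> exp (pi * \<bar>Im lam\<bar>) * (2 powr m * h powr (-m))"
    by (rule mult_mono[OF e2]) (use p2 p2' in auto)
  show "K * exp (- pi * \<bar>Im lam\<bar>) * h powr (-m) \<le> norm (delta lam y x)"
    unfolding nd using mult_left_mono[OF l1 K] by (simp add: mult_ac)
  show "norm (delta lam y x) \<le> K * exp (pi * \<bar>Im lam\<bar>) * 2 powr m * h powr (-m)"
    unfolding nd using mult_left_mono[OF l2 K] by (simp add: mult_ac)
qed


lemma P1_half:
  fixes c a p :: real
  assumes c: "c > 0" and a: "a > 0" and p: "p > 1"
  shows "(\<integral>\<^sup>+s. ennreal ((c + a * s) powr (-p)) * indicator {0..} s \<partial>lborel)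
     = ennreal (c powr (1 - p) / (a * (p - 1)))"
proof -
  define F where "F x = (-1 / (a * (p - 1))) * (c + a * x) powr (1 - p)" for x
  have "(\<integral>\<^sup>+s. ennreal ((c + a * s) powr (-p)) * indicator {0..} s \<partial>lborel) = 0 - F 0"
  proof (rule nn_integral_FTC_atLeast)
    show "(\<lambda>s. (c + a * s) powr (-p)) \<in> borel_measurable borel" by measurable
    fix x :: real assume x: "0 \<le> x"
    then have pos: "c + a * x > 0" using c a by (smt (verit) mult_nonneg_nonneg)
    show "0 \<le> (c + a * x) powr (-p)" by simp
    have "DERIV (\<lambda>x. (c + a * x) powr (1 - p)) x :> (1 - p) * (c + a * x) powr (1 - p - of_nat 1) * a"
      by (rule DERIV_fun_powr) (auto intro!: derivative_eq_intros simp: pos)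
    then have "DERIV F x :> (-1 / (a * (p - 1))) * ((1 - p) * (c + a * x) powr (1 - p - of_nat 1) * a)"
      unfolding F_def by (rule DERIV_cmult)
    also have "(-1 / (a * (p - 1))) * ((1 - p) * (c + a * x) powr (1 - p - of_nat 1) * a) = (c + a * x) powr (-p)"
      using a p by (simp add: field_simps)
    finally show "DERIV F x :> (c + a * x) powr (-p)" .
  next
    have lim: "filterlim (\<lambda>x. c + a * x) at_top at_top"
      by (rule filterlim_tendsto_add_at_top[OF tendsto_const filterlim_tendsto_pos_mult_at_top[OF tendsto_const a filterlim_ident]])
    have "((\<lambda>x. (c + a * x) powr (1 - p)) \<longlongrightarrow> 0) at_top"
      by (rule tendsto_neg_powr[OF _ lim]) (use p in auto)
    then have "((\<lambda>x. (-1 / (a * (p - 1))) * (c + a * x) powr (1 - p)) \<longlongrightarrow> (-1 / (a * (p - 1))) * 0) at_top"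
      by (intro tendsto_intros)
    then show "(F \<longlongrightarrow> 0) at_top" unfolding F_def by simp
  qed
  also have "0 - F 0 = c powr (1 - p) / (a * (p - 1))" unfolding F_def by simp
  finally show ?thesis .
qed

lemma P1:
  fixes c a p s0 :: real
  assumes c: "c > 0" and a: "a > 0" and p: "p > 1"
  shows "(\<integral>\<^sup>+s. ennreal ((c + a * \<bar>s - s0\<bar>) powr (-p)) \<partial>lborel)
     \<le> ennreal (2 * (c powr (1 - p) / (a * (p - 1))))"
proof -
  let ?g = "\<lambda>s::real. ennreal ((c + a * \<bar>s\<bar>) powr (-p))"
  have m: "?g \<in> borel_measurable borel" by measurable
  have m2: "(\<lambda>s. ?g (s - s0)) \<in> borel_measurable borel" by measurable
  have "(\<integral>\<^sup>+s. ennreal ((c + a * \<bar>s - s0\<bar>) powr (-p)) \<partial>lborel) = (\<integral>\<^sup>+s. ?g ((s0 + 1 * s) - s0) \<partial>lborel)"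
    using nn_integral_real_affine[OF m2, of 1 s0] by simp
  also have "\<dots> = (\<integral>\<^sup>+s. ?g s \<partial>lborel)"
    by simp
  also have "\<dots> = (\<integral>\<^sup>+s. ?g s * indicator {0..} s + ?g s * indicator {..<0} s \<partial>lborel)"
    by (intro nn_integral_cong) (auto split: split_indicator)
  also have "\<dots> = (\<integral>\<^sup>+s. ?g s * indicator {0..} s \<partial>lborel) + (\<integral>\<^sup>+s. ?g s * indicator {..<0} s \<partial>lborel)"
    by (rule nn_integral_add) auto
  finally have eq: "(\<integral>\<^sup>+s. ennreal ((c + a * \<bar>s - s0\<bar>) powr (-p)) \<partial>lborel) = 
     (\<integral>\<^sup>+s. ?g s * indicator {0..} s \<partial>lborel) + (\<integral>\<^sup>+s. ?g s * indicator {..<0} s \<partial>lborel)" .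
  have "(\<integral>\<^sup>+s. ?g s * indicator {..<0} s \<partial>lborel) = (\<integral>\<^sup>+s. ?g (0 + (-1) * s) * indicator {..<0} (0 + (-1) * s) \<partial>lborel)"
    using nn_integral_real_affine[of "\<lambda>s. ?g s * indicator {..<0} s" "-1" 0] by simp
  also have "\<dots> \<le> (\<integral>\<^sup>+s. ?g s * indicator {0..} s \<partial>lborel)"
    by (intro nn_integral_mono) (auto split: split_indicator)
  finally have le: "(\<integral>\<^sup>+s. ?g s * indicator {..<0} s \<partial>lborel) \<le> (\<integral>\<^sup>+s. ?g s * indicator {0..} s \<partial>lborel)" .
  have h: "(\<integral>\<^sup>+s. ?g s * indicator {0..} s \<partial>lborel) = ennreal (c powr (1 - p) / (a * (p - 1)))"
    using P1_half[OF c a p] by (intro trans[OF _ P1_half[OF c a p]] nn_integral_cong) (auto split: split_indicator)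
  have nn: "c powr (1 - p) / (a * (p - 1)) \<ge> 0" using a p by simp
  show ?thesis unfolding eq using add_left_mono[OF le, of "(\<integral>\<^sup>+s. ?g s * indicator {0..} s \<partial>lborel)"]
    unfolding h by (simp add: ennreal_plus[symmetric] nn del: ennreal_plus)
qed


lemma section_formula:
  fixes f :: "'a::euclidean_space \<Rightarrow> ennreal" and b :: 'a
  assumes b: "b \<in> Basis" and f[measurable]: "f \<in> borel_measurable borel"
  shows "(\<integral>\<^sup>+z. f z \<partial>lborel) = (\<integral>\<^sup>+x. indicator {0..1} (x \<bullet> b) * (\<integral>\<^sup>+s. f (x + s *\<^sub>R b) \<partial>lborel) \<partial>lborel)"
proof -
  have "(\<integral>\<^sup>+x. indicator {0..1} (x \<bullet> b) * (\<integral>\<^sup>+s. f (x + s *\<^sub>R b) \<partial>lborel) \<partial>lborel)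
      = (\<integral>\<^sup>+x. (\<integral>\<^sup>+s. indicator {0..1} (x \<bullet> b) * f (x + s *\<^sub>R b) \<partial>lborel) \<partial>lborel)"
    by (intro nn_integral_cong nn_integral_cmult[symmetric]) measurable
  also have "\<dots> = (\<integral>\<^sup>+s. (\<integral>\<^sup>+x. indicator {0..1} (x \<bullet> b) * f (x + s *\<^sub>R b) \<partial>lborel) \<partial>lborel)"
    by (rule lborel_pair.Fubini') measurable
  also have "\<dots> = (\<integral>\<^sup>+s. (\<integral>\<^sup>+z. indicator {0..1} (z \<bullet> b - s) * f z \<partial>lborel) \<partial>lborel)"
  proof (rule nn_integral_cong)
    fix s :: real
    let ?G = "\<lambda>z. indicator {0..1} (z \<bullet> b - s) * f z"
    have "(\<integral>\<^sup>+z. ?G z \<partial>lborel) = (\<integral>\<^sup>+z. ?G z \<partial>(distr lborel borel ((+) (s *\<^sub>R b))))"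
      by (simp add: lborel_distr_plus)
    also have "\<dots> = (\<integral>\<^sup>+x. ?G (s *\<^sub>R b + x) \<partial>lborel)"
      by (rule nn_integral_distr) measurable
    also have "\<dots> = (\<integral>\<^sup>+x. indicator {0..1} (x \<bullet> b) * f (x + s *\<^sub>R b) \<partial>lborel)"
      using b by (simp add: inner_add_left add.commute)
    finally show "(\<integral>\<^sup>+x. indicator {0..1} (x \<bullet> b) * f (x + s *\<^sub>R b) \<partial>lborel) = (\<integral>\<^sup>+z. ?G z \<partial>lborel)" by (rule sym)
  qed
  also have "\<dots> = (\<integral>\<^sup>+z. (\<integral>\<^sup>+s. indicator {0..1} (z \<bullet> b - s) * f z \<partial>lborel) \<partial>lborel)"
    by (rule lborel_pair.Fubini'[symmetric]) measurable
  also have "\<dots> = (\<integral>\<^sup>+z. f z * (\<integral>\<^sup>+s. indicator {z \<bullet> b - 1 .. z \<bullet> b} s \<partial>lborel) \<partial>lborel)"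
  proof (rule nn_integral_cong)
    fix z :: 'a
    have "(\<integral>\<^sup>+s. indicator {0..1} (z \<bullet> b - s) * f z \<partial>lborel) = (\<integral>\<^sup>+s. f z * indicator {z \<bullet> b - 1 .. z \<bullet> b} s \<partial>lborel)"
      by (intro nn_integral_cong) (auto split: split_indicator)
    also have "\<dots> = f z * (\<integral>\<^sup>+s. indicator {z \<bullet> b - 1 .. z \<bullet> b} s \<partial>lborel)"
      by (rule nn_integral_cmult) simp
    finally show "(\<integral>\<^sup>+s. indicator {0..1} (z \<bullet> b - s) * f z \<partial>lborel) = f z * (\<integral>\<^sup>+s. indicator {z \<bullet> b - 1 .. z \<bullet> b} s \<partial>lborel)" .
  qed
  also have "\<dots> = (\<integral>\<^sup>+z. f z \<partial>lborel)"
    by simp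
  finally show ?thesis by (rule sym)
qed


lemma sq_aux: "((1::real) + u)^2 / 2 \<le> 1 + u^2"
proof -
  have "0 \<le> (1 - u)^2" by simp
  then have "(1 + u)^2 \<le> 2 * (1 + u^2)" by (simp add: power2_eq_square algebra_simps)
  then show ?thesis by simp
qed

lemma Q1:
  fixes e q :: real
  assumes e: "e > 0" and q: "q > 1/2"
  shows "(\<integral>\<^sup>+t. ennreal ((1 + t^2 / e) powr (-q)) \<partial>lborel) \<le> ennreal (2 * (2 powr q * sqrt e / (2*q - 1)))"
proof -
  have se: "sqrt e > 0" using e by simp
  have pt: "(1 + t^2 / e) powr (-q) \<le> 2 powr q * (1 + (1 / sqrt e) * \<bar>t - 0\<bar>) powr (- (2*q))" for t
  proof -
    let ?u = "\<bar>t\<bar> / sqrt e"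
    have u: "t^2 / e = ?u^2" using e by (simp add: power_divide)
    have upos: "1 + ?u > 0" using se by (metis add_pos_nonneg zero_less_one abs_ge_zero divide_nonneg_pos)
    have "(1 + ?u)^2 / 2 \<le> 1 + ?u^2" by (rule sq_aux)
    moreover have "(1 + ?u)^2 / 2 > 0" using upos by simp
    ultimately have "(1 + ?u^2) powr (-q) \<le> ((1 + ?u)^2 / 2) powr (-q)"
      by (intro powr_mono2') (use q in auto)
    also have "((1 + ?u)^2 / 2) powr (-q) = 2 powr q * (1 + ?u) powr (- (2*q))"
    proof -
      have pos: "1 + ?u > 0" by (rule upos)
      have "((1 + ?u)^2 / 2) powr (-q) = ((1 + ?u)^2) powr (-q) / 2 powr (-q)"
        by (rule powr_divide)
      also have "((1 + ?u)^2) powr (-q) = (1 + ?u) powr (- (2*q))"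
      proof -
        have "(1 + ?u)^2 = (1 + ?u) powr 2" using pos by (simp add: powr_numeral)
        then have "((1 + ?u)^2) powr (-q) = ((1 + ?u) powr 2) powr (-q)" by simp
        also have "\<dots> = (1 + ?u) powr (- (2*q))" by (simp add: powr_powr)
        finally show ?thesis .
      qed
      finally show ?thesis by (simp add: powr_minus divide_simps)
    qed
    finally show ?thesis using u by simp
  qed
  have "(\<integral>\<^sup>+t. ennreal ((1 + t^2 / e) powr (-q)) \<partial>lborel)
      \<le> (\<integral>\<^sup>+t. ennreal (2 powr q) * ennreal ((1 + (1 / sqrt e) * \<bar>t - 0\<bar>) powr (- (2*q))) \<partial>lborel)"
    by (intro nn_integral_mono) (use pt in \<open>simp add: ennreal_mult[symmetric]\<close>)
  also have "\<dots> = ennreal (2 powr q) * (\<integral>\<^sup>+t. ennreal ((1 + (1 / sqrt e) * \<bar>t - 0\<bar>) powr (- (2*q))) \<partial>lborel)"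
    by (rule nn_integral_cmult) measurable
  also have "\<dots> \<le> ennreal (2 powr q) * ennreal (2 * (1 powr (1 - 2*q) / ((1 / sqrt e) * (2*q - 1))))"
    by (intro mult_left_mono P1) (use se q in auto)
  also have "\<dots> = ennreal (2 * (2 powr q * sqrt e / (2*q - 1)))"
    using q se by (simp add: ennreal_mult[symmetric] field_simps)
  finally show ?thesis .
qed

lemma prod_ineq:
  fixes a :: "'b \<Rightarrow> real" and p :: real
  assumes S: "finite S" "S \<noteq> {}" and a: "\<And>j. j \<in> S \<Longrightarrow> a j \<ge> 0" and p: "p \<ge> 0"
  shows "(1 + (\<Sum>j\<in>S. a j)) powr (-p) \<le> (\<Prod>j\<in>S. (1 + a j) powr (- (p / card S)))"
proof -
  have k: "card S > 0" using S by auto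
  have sum_ge: "a j \<le> (\<Sum>j\<in>S. a j)" if "j \<in> S" for j
    using that a S(1) by (intro member_le_sum) auto
  have "(\<Prod>j\<in>S. (1 + a j) powr (p / card S)) \<le> (\<Prod>j\<in>S. (1 + (\<Sum>j\<in>S. a j)) powr (p / card S))"
    by (intro prod_mono conjI powr_mono2) (use a sum_ge p in auto)
  also have "\<dots> = ((1 + (\<Sum>j\<in>S. a j)) powr (p / card S)) ^ card S" by simp
  also have "\<dots> = (1 + (\<Sum>j\<in>S. a j)) powr p"
  proof -
    have X: "1 + (\<Sum>j\<in>S. a j) > 0" using a by (simp add: add_pos_nonneg sum_nonneg)
    have "((1 + (\<Sum>j\<in>S. a j)) powr (p / card S)) ^ card S = ((1 + (\<Sum>j\<in>S. a j)) powr (p / card S)) powr (real (card S))"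
      using X by (simp add: powr_realpow)
    also have "\<dots> = (1 + (\<Sum>j\<in>S. a j)) powr (p / card S * card S)" by (simp add: powr_powr)
    finally show ?thesis using k by simp
  qed
  finally have le: "(\<Prod>j\<in>S. (1 + a j) powr (p / card S)) \<le> (1 + (\<Sum>j\<in>S. a j)) powr p" .
  have pos: "(\<Prod>j\<in>S. (1 + a j) powr (p / card S)) > 0"
  proof (intro prod_pos)
    fix j assume "j \<in> S"
    then have "1 + a j > 0" using a[of j] by linarith
    then show "(1 + a j) powr (p / card S) > 0" by simp
  qed
  have "(1 + (\<Sum>j\<in>S. a j)) powr (-p) = 1 / (1 + (\<Sum>j\<in>S. a j)) powr p" by (simp add: powr_minus_divide)
  also have "\<dots> \<le> 1 / (\<Prod>j\<in>S. (1 + a j) powr (p / card S))"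
  proof -
    have "(1 + (\<Sum>j\<in>S. a j)) powr p > 0" using order.strict_trans2[OF pos le] .
    then show ?thesis by (intro divide_left_mono le) (use pos in auto)
  qed
  also have "\<dots> = (\<Prod>j\<in>S. (1 + a j) powr (- (p / card S)))"
    by (simp add: powr_minus_divide prod_dividef)
  finally show ?thesis .
qed

lemma ennreal_prod_mono:
  fixes f g :: "'b \<Rightarrow> ennreal"
  assumes "finite S" "\<And>j. j \<in> S \<Longrightarrow> f j \<le> g j"
  shows "(\<Prod>j\<in>S. f j) \<le> (\<Prod>j\<in>S. g j)"
  using assms by (induction S rule: finite_induct) (auto intro!: mult_mono)

lemma prod_int_le:
  fixes g :: "'a::euclidean_space \<Rightarrow> real \<Rightarrow> ennreal"
  assumes m: "\<And>b. b \<in> Basis \<Longrightarrow> g b \<in> borel_measurable borel"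
    and B: "\<And>b. b \<in> Basis \<Longrightarrow> (\<integral>\<^sup>+t. g b t \<partial>lborel) \<le> B b"
  shows "(\<integral>\<^sup>+x. (\<Prod>b\<in>Basis. g b (x \<bullet> b)) \<partial>lborel) \<le> (\<Prod>b\<in>Basis. B b)"
  by (subst nn_integral_lborel_prod) (use m B in \<open>auto intro!: ennreal_prod_mono\<close>)

lemma prod_int_eq:
  fixes g :: "'a::euclidean_space \<Rightarrow> real \<Rightarrow> ennreal"
  assumes m: "\<And>b. b \<in> Basis \<Longrightarrow> g b \<in> borel_measurable borel"
  shows "(\<integral>\<^sup>+x. (\<Prod>b\<in>Basis. g b (x \<bullet> b)) \<partial>lborel) = (\<Prod>b\<in>Basis. (\<integral>\<^sup>+t. g b t \<partial>lborel))"
  by (subst nn_integral_lborel_prod) (use m in auto)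


definition rr :: "nat \<Rightarrow> real" where "rr k = 1 - (1/2)^k"
definition shell :: "nat \<Rightarrow> 'a::euclidean_space set" where
  "shell k = {y. rr k \<le> norm y \<and> norm y < rr (Suc k)}"

lemma rr_mono: "k \<le> l \<Longrightarrow> rr k \<le> rr l"
  unfolding rr_def by (simp add: power_decreasing)

lemma rr_bounds: "0 \<le> rr k" "rr k < 1"
  unfolding rr_def by (auto simp: power_le_one)

lemma shell_disj: "disjoint_family (shell :: nat \<Rightarrow> 'a::euclidean_space set)"
  unfolding disjoint_family_on_def shell_def
proof (intro ballI impI, auto)
  fix m n :: nat and y :: 'a
  assume "m \<noteq> n" "rr m \<le> norm y" "norm y < rr (Suc m)" "rr n \<le> norm y" "norm y < rr (Suc n)"
  then show False
  proof (cases "m < n")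
    case True
    then have "rr (Suc m) \<le> rr n" by (intro rr_mono) auto
    then show False using \<open>norm y < rr (Suc m)\<close> \<open>rr n \<le> norm y\<close> by linarith
  next
    case False
    then have "n < m" using \<open>m \<noteq> n\<close> by auto
    then have "rr (Suc n) \<le> rr m" by (intro rr_mono) auto
    then show False using \<open>norm y < rr (Suc n)\<close> \<open>rr m \<le> norm y\<close> by linarith
  qed
qed

lemma shell_Union: "(\<Union>k. shell k) = (ball (0::'a::euclidean_space) 1)"
proof
  show "(\<Union>k. shell k) \<subseteq> ball (0::'a) 1"
    by (auto simp: shell_def) (metis less_trans rr_bounds(2))
next
  show "ball (0::'a) 1 \<subseteq> (\<Union>k. shell k)"
  proof
    fix y :: 'a assume "y \<in> ball 0 1"
    then have y: "norm y < 1" by simp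
    obtain N where N: "(1/2::real)^N < 1 - norm y" using real_arch_pow_inv[of "1 - norm y" "1/2"] y by auto
    have ex: "\<exists>k. norm y < rr k" using N by (auto simp: rr_def intro!: exI[of _ N])
    define k where "k = (LEAST k. norm y < rr k)"
    have k1: "norm y < rr k" unfolding k_def by (rule LeastI_ex[OF ex])
    have k0: "k \<noteq> 0" using k1 norm_ge_zero[of y] by (cases k) (auto simp: rr_def)
    then obtain j where j: "k = Suc j" by (cases k) auto
    have "\<not> norm y < rr j" using not_less_Least[of j "\<lambda>k. norm y < rr k"] j unfolding k_def by auto
    then have "y \<in> shell j" using k1 j by (auto simp: shell_def)
    then show "y \<in> (\<Union>k. shell k)" by auto
  qed
qed

lemma shell_sets[measurable]: "shell k \<in> sets lborel"
  unfolding shell_def by measurable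

lemma shell_eq: "shell k = ball (0::'a::euclidean_space) (rr (Suc k)) - ball 0 (rr k)"
  by (auto simp: shell_def)

lemma emeasure_shell:
  "emeasure lborel (shell k :: 'a::euclidean_space set)
     = ennreal (unit_ball_vol (DIM('a)) * (rr (Suc k) ^ DIM('a) - rr k ^ DIM('a)))"
proof -
  have sub: "ball (0::'a) (rr k) \<subseteq> ball 0 (rr (Suc k))" using rr_mono[of k "Suc k"] by auto
  have "emeasure lborel (shell k :: 'a set) = emeasure lborel (ball (0::'a) (rr (Suc k))) - emeasure lborel (ball (0::'a) (rr k))"
  proof (unfold shell_eq, rule emeasure_Diff)
    show "emeasure lborel (ball (0::'a) (rr k)) \<noteq> \<infinity>" unfolding emeasure_ball[OF rr_bounds(1)] by simp
  qed (use sub in auto)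
  also have "\<dots> = ennreal (unit_ball_vol (DIM('a)) * rr (Suc k) ^ DIM('a) - unit_ball_vol (DIM('a)) * rr k ^ DIM('a))"
    unfolding emeasure_ball[OF rr_bounds(1)] by (rule ennreal_minus) (use rr_bounds in auto)
  finally show ?thesis by (simp add: algebra_simps)
qed

lemma pow_diff_upper: "0 \<le> (b::real) \<Longrightarrow> b \<le> a \<Longrightarrow> a \<le> 1 \<Longrightarrow> a ^ n - b ^ n \<le> real n * (a - b)"
proof (induction n)
  case (Suc n)
  have bn: "b^n \<le> a^n" by (rule power_mono) (use Suc in auto)
  have "a ^ Suc n - b ^ Suc n = a * (a^n - b^n) + (a - b) * b^n" by (simp add: algebra_simps)
  also have "\<dots> \<le> 1 * (real n * (a - b)) + (a - b) * 1"
    using Suc bn by (intro add_mono mult_mono) (auto simp: power_le_one)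
  finally show ?case by (simp add: algebra_simps)
qed simp

lemma pow_diff_lower: "0 \<le> (b::real) \<Longrightarrow> b \<le> a \<Longrightarrow> n \<ge> 1 \<Longrightarrow> a ^ n - b ^ n \<ge> (a - b) * b ^ (n - 1)"
proof -
  assume h: "0 \<le> b" "b \<le> a" "n \<ge> 1"
  then obtain m where n: "n = Suc m" by (cases n) auto
  have bn: "b^m \<le> a^m" by (rule power_mono) (use h in auto)
  have "a ^ Suc m - b ^ Suc m = a * (a^m - b^m) + (a - b) * b^m" by (simp add: algebra_simps)
  moreover have "a * (a^m - b^m) \<ge> 0" using bn h by simp
  ultimately show ?thesis using n by simp
qed

lemma powr_pow_swap: "(x::real) > 0 \<Longrightarrow> (x ^ n) powr a = (x powr a) ^ n"
  by (simp add: powr_realpow[symmetric] powr_powr mult.commute)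

lemma suminf_const_top:
  assumes "c > 0"
  shows "(\<Sum>k. ennreal c) = \<infinity>"
proof (rule ccontr)
  assume "(\<Sum>k. ennreal c) \<noteq> \<infinity>"
  then obtain M where M: "(\<Sum>k. ennreal c) = ennreal M" "M \<ge> 0"
    using ennreal_cases[of "(\<Sum>k. ennreal c)"] by auto
  obtain N :: nat where N: "real N * c > M" using reals_Archimedean3[OF assms] by auto
  have "ennreal (real N * c) = (\<Sum>k<N. ennreal c)" using assms by (simp add: ennreal_mult ennreal_of_nat_eq_real_of_nat)
  also have "\<dots> \<le> (\<Sum>k. ennreal c)" by (rule sum_le_suminf) auto
  finally show False using M N assms by (simp add: ennreal_le_iff)
qed

lemma ball_int_finite:
  fixes \<gamma> :: real
  assumes g: "\<gamma> > -1"
  shows "(\<integral>\<^sup>+y. ennreal ((1 - norm y ^ 2) powr \<gamma>) * indicator (ball (0::'a::euclidean_space) 1) y \<partial>lborel) < \<infinity>"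
proof (cases "\<gamma> \<ge> 0")
  case True
  have "(\<integral>\<^sup>+y. ennreal ((1 - norm y ^ 2) powr \<gamma>) * indicator (ball (0::'a) 1) y \<partial>lborel)
      \<le> (\<integral>\<^sup>+y. indicator (ball (0::'a) 1) y \<partial>lborel)"
  proof (intro nn_integral_mono)
    fix y :: 'a
    show "ennreal ((1 - norm y ^ 2) powr \<gamma>) * indicator (ball 0 1) y \<le> indicator (ball 0 1) y"
    proof (cases "y \<in> ball 0 1")
      case True
      then have "norm y ^ 2 < 1" by (simp add: power_less_one_iff abs_square_less_1)
      then have "(1 - norm y ^ 2) powr \<gamma> \<le> 1 powr \<gamma>"
        using \<open>\<gamma> \<ge> 0\<close> by (intro powr_mono2) auto
      then have "(1 - norm y ^ 2) powr \<gamma> \<le> 1" by simp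
      then show ?thesis using True by simp
    qed simp
  qed
  also have "\<dots> = emeasure lborel (ball (0::'a) 1)" by simp
  also have "\<dots> < \<infinity>" by (simp add: emeasure_ball)
  finally show ?thesis .
next
  case False
  then have gn: "\<gamma> < 0" by simp
  define V where "V = unit_ball_vol (DIM('a))"
  have V: "V \<ge> 0" unfolding V_def by simp
  define \<rho> where "\<rho> = (1/2::real) powr (\<gamma> + 1)"
  have \<rho>: "0 < \<rho>" "\<rho> < 1" unfolding \<rho>_def
    using g powr_less_mono'[of "1/2::real" 0 "\<gamma> + 1"] by auto
  let ?f = "\<lambda>y::'a. ennreal ((1 - norm y ^ 2) powr \<gamma>)"
  have "(\<integral>\<^sup>+y. ?f y * indicator (ball (0::'a) 1) y \<partial>lborel) = (\<integral>\<^sup>+y. (\<Sum>k. ?f y * indicator (shell k) y) \<partial>lborel)"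
    by (intro nn_integral_cong) (simp add: ennreal_suminf_cmult suminf_indicator[OF shell_disj] shell_Union)
  also have "\<dots> = (\<Sum>k. (\<integral>\<^sup>+y. ?f y * indicator (shell k) y \<partial>lborel))"
    by (rule nn_integral_suminf) measurable
  also have "\<dots> \<le> (\<Sum>k. ennreal (V * real DIM('a) * \<rho> ^ Suc k))"
  proof (intro suminf_le summableI)
    fix k
    have "(\<integral>\<^sup>+y. ?f y * indicator (shell k) y \<partial>lborel) \<le> (\<integral>\<^sup>+y. ennreal (((1/2)^Suc k) powr \<gamma>) * indicator (shell k :: 'a set) y \<partial>lborel)"
    proof (intro nn_integral_mono)
      fix y :: 'a
      show "?f y * indicator (shell k) y \<le> ennreal (((1/2)^Suc k) powr \<gamma>) * indicator (shell k) y"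
      proof (cases "y \<in> shell k")
        case True
        then have y: "norm y < 1 - (1/2)^Suc k" by (simp add: shell_def rr_def)
        have "(0::real) < (1/2)^Suc k" by simp
        then have y1: "norm y < 1" using y by linarith
        have "(1/2)^Suc k \<le> 1 - norm y" using y by simp
        also have "1 - norm y \<le> 1 - norm y ^ 2" using y1 by (simp add: power2_eq_square mult_left_le_one_le)
        finally have le: "(1/2)^Suc k \<le> 1 - norm y ^ 2" .
        have "(1 - norm y ^ 2) powr \<gamma> \<le> ((1/2)^Suc k) powr \<gamma>"
          by (rule powr_mono2'[OF _ _ le]) (use gn in auto)
        then show ?thesis using True by simp
      qed simp
    qed
    also have "\<dots> = ennreal (((1/2)^Suc k) powr \<gamma>) * emeasure lborel (shell k :: 'a set)"
      by (rule nn_integral_cmult_indicator[OF shell_sets])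
    also have "\<dots> \<le> ennreal (((1/2)^Suc k) powr \<gamma>) * ennreal (V * real DIM('a) * (1/2)^Suc k)"
    proof (intro mult_left_mono)
      have "rr (Suc k) ^ DIM('a) - rr k ^ DIM('a) \<le> real DIM('a) * (rr (Suc k) - rr k)"
        by (rule pow_diff_upper) (use rr_bounds(1)[of k] rr_bounds(2)[of "Suc k"] rr_mono[of k "Suc k"] in auto)
      also have "rr (Suc k) - rr k = (1/2)^Suc k" by (simp add: rr_def)
      finally have "V * (rr (Suc k) ^ DIM('a) - rr k ^ DIM('a)) \<le> V * (real DIM('a) * (1/2)^Suc k)"
        by (rule mult_left_mono) (rule V)
      then show "emeasure lborel (shell k :: 'a set) \<le> ennreal (V * real DIM('a) * (1/2)^Suc k)"
        unfolding emeasure_shell V_def[symmetric] by (metis ennreal_leI mult.assoc)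
    qed simp
    also have "\<dots> = ennreal (V * real DIM('a) * (((1/2)^Suc k) powr \<gamma> * (1/2)^Suc k))"
      by (simp add: ennreal_mult[symmetric] V mult_ac)
    also have "((1/2::real)^Suc k) powr \<gamma> * (1/2)^Suc k = \<rho> ^ Suc k"
    proof -
      have "((1/2::real)^Suc k) powr \<gamma> * (1/2)^Suc k = ((1/2::real)^Suc k) powr (\<gamma> + 1)"
        by (simp add: powr_add)
      also have "\<dots> = \<rho> ^ Suc k" unfolding \<rho>_def by (rule powr_pow_swap) simp
      finally show ?thesis .
    qed
    finally show "(\<integral>\<^sup>+y. ?f y * indicator (shell k) y \<partial>lborel) \<le> ennreal (V * real DIM('a) * \<rho> ^ Suc k)" .
  qed
  also have "\<dots> = ennreal (\<Sum>k. V * real DIM('a) * \<rho> ^ Suc k)"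
  proof (rule suminf_ennreal2)
    have "summable (\<lambda>i. \<rho> * \<rho> ^ i)" using summable_mult[OF summable_geometric[of \<rho>], of \<rho>] \<rho> by simp
    then show "summable (\<lambda>k. V * real DIM('a) * \<rho> ^ Suc k)" by (intro summable_mult) simp
  qed (use V \<rho> in auto)
  also have "\<dots> < \<infinity>" by simp
  finally show ?thesis .
qed

lemma ball_int_infinite:
  fixes \<gamma> :: real
  assumes g: "\<gamma> \<le> -1"
  shows "(\<integral>\<^sup>+y. ennreal ((1 - norm y ^ 2) powr \<gamma>) * indicator (ball (0::'a::euclidean_space) 1 - ball 0 (1/2)) y \<partial>lborel) = \<infinity>"
proof -
  define V where "V = unit_ball_vol (DIM('a))"
  have V: "V > 0" unfolding V_def by simp
  define c where "c = V / 4 * (1/2) ^ (DIM('a) - 1)"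
  have c: "c > 0" unfolding c_def using V by simp
  let ?f = "\<lambda>y::'a. ennreal ((1 - norm y ^ 2) powr \<gamma>)"
  have dj: "disjoint_family (\<lambda>k. shell (Suc k) :: 'a set)"
    using shell_disj unfolding disjoint_family_on_def by (metis Suc_inject UNIV_I)
  have sub: "(\<Union>k. shell (Suc k)) \<subseteq> ball (0::'a) 1 - ball 0 (1/2)"
  proof -
    have "shell (Suc k) \<subseteq> ball (0::'a) 1 - ball 0 (1/2)" for k
    proof -
      have "rr 1 \<le> rr (Suc k)" by (rule rr_mono) simp
      then have "1/2 \<le> rr (Suc k)" by (simp add: rr_def)
      then show ?thesis using shell_Union by (auto simp: shell_def)
    qed
    then show ?thesis by auto
  qed
  have "(\<Sum>k. ennreal c) \<le> (\<Sum>k. (\<integral>\<^sup>+y. ?f y * indicator (shell (Suc k)) y \<partial>lborel))"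
  proof (intro suminf_le summableI)
    fix k
    define j where "j = Suc k"
    have j1: "j \<ge> 1" unfolding j_def by simp
    have "ennreal c = ennreal (1 / (2 * (1/2)^j)) * ennreal (V * ((1/2)^Suc j * (1/2)^(DIM('a) - 1)))"
      unfolding c_def using V by (simp add: ennreal_mult[symmetric] field_simps)
    also have "\<dots> \<le> ennreal (1 / (2 * (1/2)^j)) * emeasure lborel (shell j :: 'a set)"
    proof (intro mult_left_mono)
      have rj: "1/2 \<le> rr j" using rr_mono[OF j1] by (simp add: rr_def)
      have "(rr (Suc j) - rr j) * rr j ^ (DIM('a) - 1) \<le> rr (Suc j) ^ DIM('a) - rr j ^ DIM('a)"
        by (rule pow_diff_lower) (use rr_bounds(1)[of j] rr_mono[of j "Suc j"] in auto)
      moreover have "rr (Suc j) - rr j = (1/2)^Suc j" by (simp add: rr_def)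
      moreover have "(1/2)^(DIM('a) - 1) \<le> rr j ^ (DIM('a) - 1)" by (rule power_mono) (use rj in auto)
      ultimately have "(1/2)^Suc j * (1/2)^(DIM('a) - 1) \<le> rr (Suc j) ^ DIM('a) - rr j ^ DIM('a)"
        by (smt (verit) mult_left_mono zero_le_power divide_nonneg_pos)
      then have "V * ((1/2)^Suc j * (1/2)^(DIM('a) - 1)) \<le> V * (rr (Suc j) ^ DIM('a) - rr j ^ DIM('a))"
        using V by (intro mult_left_mono) auto
      then show "ennreal (V * ((1/2)^Suc j * (1/2)^(DIM('a) - 1))) \<le> emeasure lborel (shell j :: 'a set)"
        unfolding emeasure_shell V_def[symmetric] by (rule ennreal_leI)
    qed simp
    also have "\<dots> = (\<integral>\<^sup>+y. ennreal (1 / (2 * (1/2)^j)) * indicator (shell j :: 'a set) y \<partial>lborel)"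
      by (rule nn_integral_cmult_indicator[OF shell_sets, symmetric])
    also have "\<dots> \<le> (\<integral>\<^sup>+y. ?f y * indicator (shell j) y \<partial>lborel)"
    proof (intro nn_integral_mono)
      fix y :: 'a
      show "ennreal (1 / (2 * (1/2)^j)) * indicator (shell j) y \<le> ?f y * indicator (shell j) y"
      proof (cases "y \<in> shell j")
        case True
        then have y: "1 - (1/2)^j \<le> norm y" "norm y < 1 - (1/2)^Suc j" by (auto simp: shell_def rr_def)
        have "(0::real) < (1/2)^Suc j" by simp
        then have y1: "norm y < 1" using y by linarith
        have pos: "0 < 1 - norm y ^ 2" using y1 by (simp add: abs_square_less_1)
        have "1 - norm y ^ 2 = (1 - norm y) * (1 + norm y)" by (simp add: power2_eq_square algebra_simps)
        also have "\<dots> \<le> (1/2)^j * 2" using y y1 by (intro mult_mono) auto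
        finally have le: "1 - norm y ^ 2 \<le> 2 * (1/2)^j" by simp
        have "(1/2::real)^j \<le> (1/2)^1" by (rule power_decreasing) (use j1 in auto)
        then have le1: "1 - norm y ^ 2 \<le> 1" using le by simp
        have "1 / (2 * (1/2)^j) \<le> 1 / (1 - norm y ^ 2)"
          by (rule divide_left_mono[OF le]) (use pos in auto)
        also have "\<dots> = (1 - norm y ^ 2) powr (-1)" using pos by (simp add: powr_minus_divide)
        also have "\<dots> \<le> (1 - norm y ^ 2) powr \<gamma>"
          by (rule powr_mono'[OF g]) (use pos le1 in auto)
        finally show ?thesis using True by (simp add: ennreal_leI)
      qed simp
    qed
    finally show "ennreal c \<le> (\<integral>\<^sup>+y. ?f y * indicator (shell (Suc k)) y \<partial>lborel)" unfolding j_def .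
  qed
  also have "\<dots> = (\<integral>\<^sup>+y. (\<Sum>k. ?f y * indicator (shell (Suc k)) y) \<partial>lborel)"
    by (rule nn_integral_suminf[symmetric]) measurable
  also have "\<dots> \<le> (\<integral>\<^sup>+y. ?f y * indicator (ball (0::'a) 1 - ball 0 (1/2)) y \<partial>lborel)"
  proof (intro nn_integral_mono)
    fix y :: 'a
    have "(\<Sum>k. ?f y * indicator (shell (Suc k)) y) = ?f y * indicator (\<Union>k. shell (Suc k)) y"
      by (simp add: ennreal_suminf_cmult suminf_indicator[OF dj])
    also have "\<dots> \<le> ?f y * indicator (ball (0::'a) 1 - ball 0 (1/2)) y"
    proof (intro mult_left_mono)
      show "indicator (\<Union>k. shell (Suc k)) y \<le> (indicator (ball (0::'a) 1 - ball 0 (1/2)) y :: ennreal)"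
      proof (cases "y \<in> (\<Union>k. shell (Suc k))")
        case True
        then have "y \<in> ball (0::'a) 1 - ball 0 (1/2)" using sub by blast
        then show ?thesis using True by (simp only: indicator_simps(1) order_refl)
      next
        case False
        show ?thesis by (subst indicator_simps(2)[OF False]) simp
      qed
    qed simp
    finally show "(\<Sum>k. ?f y * indicator (shell (Suc k)) y) \<le> ?f y * indicator (ball (0::'a) 1 - ball 0 (1/2)) y" .
  qed
  finally show ?thesis using suminf_const_top[OF c] by (simp add: top_unique)
qed


lemma norm_sq_sum: "norm z ^ 2 = (\<Sum>b\<in>Basis. (z \<bullet> b)^2)" for z :: "'a::euclidean_space"
  by (metis (no_types, lifting) dot_square_norm euclidean_inner power2_eq_square sum.cong)

lemma inner_sum_split: "b \<in> Basis \<Longrightarrow> x \<bullet> y = (x \<bullet> b) * (y \<bullet> b) + (\<Sum>j\<in>Basis - {b}. (x \<bullet> j) * (y \<bullet> j))"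
  for x y b :: "'a::euclidean_space"
  by (subst euclidean_inner) (simp add: sum.remove)

lemma norm_sq_split: "b \<in> Basis \<Longrightarrow> norm z ^ 2 = (z \<bullet> b)^2 + (\<Sum>j\<in>Basis - {b}. (z \<bullet> j)^2)"
  for z b :: "'a::euclidean_space"
  by (simp add: norm_sq_sum sum.remove)

lemma inner_shift: "b \<in> Basis \<Longrightarrow> j \<in> Basis - {b} \<Longrightarrow> (x + s *\<^sub>R b) \<bullet> j = x \<bullet> j"
  for x b j :: "'a::euclidean_space"
  by (auto simp: inner_add_left inner_not_same_Basis)

lemma inner_shift_b: "b \<in> Basis \<Longrightarrow> (x + s *\<^sub>R b) \<bullet> b = x \<bullet> b + s"
  for x b :: "'a::euclidean_space"
  by (simp add: inner_add_left)

lemma J1_inner: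
  fixes x y b :: "'a::euclidean_space" and eps p :: real
  assumes b: "b \<in> Basis" and yb: "y \<bullet> b \<noteq> 0" and e: "eps > 0" and p: "p > 1"
  defines "E \<equiv> eps + (\<Sum>j\<in>Basis - {b}. (x \<bullet> j)^2)"
  shows "(\<integral>\<^sup>+s. ennreal ((eps + norm (x + s *\<^sub>R b) ^ 2 + 2 * \<bar>(x + s *\<^sub>R b) \<bullet> y\<bar>) powr (-p)) \<partial>lborel)
    \<le> ennreal (2 * (E powr (1 - p) / ((2 * \<bar>y \<bullet> b\<bar>) * (p - 1))))"
proof -
  define s0 where "s0 = - (x \<bullet> y) / (y \<bullet> b)"
  have E: "E > 0" unfolding E_def using e by (simp add: add_pos_nonneg sum_nonneg)
  have pt: "(eps + norm (x + s *\<^sub>R b) ^ 2 + 2 * \<bar>(x + s *\<^sub>R b) \<bullet> y\<bar>) powr (-p)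
      \<le> (E + (2 * \<bar>y \<bullet> b\<bar>) * \<bar>s - s0\<bar>) powr (-p)" for s
  proof (rule powr_mono2')
    show "0 < E + (2 * \<bar>y \<bullet> b\<bar>) * \<bar>s - s0\<bar>" using E by (simp add: add_pos_nonneg)
    have "norm (x + s *\<^sub>R b) ^ 2 \<ge> (\<Sum>j\<in>Basis - {b}. (x \<bullet> j)^2)"
      using norm_sq_split[OF b, of "x + s *\<^sub>R b"] inner_shift[OF b] by simp
    moreover have "(x + s *\<^sub>R b) \<bullet> y = (y \<bullet> b) * (s - s0)"
    proof -
      have "(x + s *\<^sub>R b) \<bullet> y = x \<bullet> y + s * (y \<bullet> b)" by (simp add: inner_add_left inner_commute[of b y])
      then show ?thesis unfolding s0_def using yb by (simp add: field_simps)
    qed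
    ultimately show "E + (2 * \<bar>y \<bullet> b\<bar>) * \<bar>s - s0\<bar> \<le> eps + norm (x + s *\<^sub>R b) ^ 2 + 2 * \<bar>(x + s *\<^sub>R b) \<bullet> y\<bar>"
      unfolding E_def by (simp add: abs_mult)
  qed (use p in auto)
  have "(\<integral>\<^sup>+s. ennreal ((eps + norm (x + s *\<^sub>R b) ^ 2 + 2 * \<bar>(x + s *\<^sub>R b) \<bullet> y\<bar>) powr (-p)) \<partial>lborel)
     \<le> (\<integral>\<^sup>+s. ennreal ((E + (2 * \<bar>y \<bullet> b\<bar>) * \<bar>s - s0\<bar>) powr (-p)) \<partial>lborel)"
    by (intro nn_integral_mono ennreal_leI pt)
  also have "\<dots> \<le> ennreal (2 * (E powr (1 - p) / ((2 * \<bar>y \<bullet> b\<bar>) * (p - 1))))"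
    by (rule P1) (use E yb p in auto)
  finally show ?thesis .
qed

lemma prod_remove_if:
  fixes g :: "'a::euclidean_space \<Rightarrow> ennreal"
  assumes b: "b \<in> Basis"
  shows "(\<Prod>j\<in>Basis. if j = b then u else g j) = u * (\<Prod>j\<in>Basis - {b}. g j)"
proof -
  have "(\<Prod>j\<in>Basis. if j = b then u else g j) = u * (\<Prod>j\<in>Basis - {b}. if j = b then u else g j)"
    using b by (simp add: prod.remove[OF finite_Basis b])
  also have "(\<Prod>j\<in>Basis - {b}. if j = b then u else g j) = (\<Prod>j\<in>Basis - {b}. g j)"
    by (rule prod.cong) auto
  finally show ?thesis .
qed

lemma J1_bound:
  fixes y b :: "'a::euclidean_space" and eps p :: real
  assumes b: "b \<in> Basis" and yb: "y \<bullet> b \<noteq> 0" and e: "eps > 0" and p: "p > 1"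
    and qass: "DIM('a) \<noteq> 1 \<Longrightarrow> (p - 1) / (real DIM('a) - 1) > 1/2"
  defines "q \<equiv> (p - 1) / (real DIM('a) - 1)"
  defines "Q \<equiv> 2 * (2 powr q / (2 * q - 1))"
  shows "(\<integral>\<^sup>+x. ennreal ((eps + norm x ^ 2 + 2 * \<bar>x \<bullet> y\<bar>) powr (-p)) \<partial>lborel)
    \<le> ennreal (eps powr (1 - p) / (\<bar>y \<bullet> b\<bar> * (p - 1))) * ennreal (Q * sqrt eps) ^ (DIM('a) - 1)"
proof -
  define C0 where "C0 = eps powr (1 - p) / (\<bar>y \<bullet> b\<bar> * (p - 1))"
  have C0: "C0 \<ge> 0" unfolding C0_def using p by simp
  define g where "g j t = (if j = b then indicator {0..1} t else ennreal ((1 + t^2 / eps) powr (-q)))" for j t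
  let ?f = "\<lambda>x::'a. ennreal ((eps + norm x ^ 2 + 2 * \<bar>x \<bullet> y\<bar>) powr (-p))"
  have cardS: "card (Basis - {b} :: 'a set) = DIM('a) - 1" using b by simp
  have "(\<integral>\<^sup>+x. ?f x \<partial>lborel) = (\<integral>\<^sup>+x. indicator {0..1} (x \<bullet> b) * (\<integral>\<^sup>+s. ?f (x + s *\<^sub>R b) \<partial>lborel) \<partial>lborel)"
    by (rule section_formula[OF b]) measurable
  also have "\<dots> \<le> (\<integral>\<^sup>+x. ennreal C0 * (\<Prod>j\<in>Basis. g j (x \<bullet> j)) \<partial>lborel)"
  proof (intro nn_integral_mono)
    fix x :: 'a
    define E where "E = eps + (\<Sum>j\<in>Basis - {b}. (x \<bullet> j)^2)"
    have E: "E > 0" unfolding E_def using e by (simp add: add_pos_nonneg sum_nonneg)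
    have i1: "(\<integral>\<^sup>+s. ?f (x + s *\<^sub>R b) \<partial>lborel) \<le> ennreal (2 * (E powr (1 - p) / ((2 * \<bar>y \<bullet> b\<bar>) * (p - 1))))"
      unfolding E_def by (rule J1_inner[OF b yb e p])
    have "E powr (1 - p) \<le> eps powr (1 - p) * (\<Prod>j\<in>Basis - {b}. (1 + (x \<bullet> j)^2 / eps) powr (-q))"
    proof -
      have Ee: "E = eps * (1 + (\<Sum>j\<in>Basis - {b}. (x \<bullet> j)^2 / eps))"
        unfolding E_def using e by (simp add: sum_divide_distrib[symmetric] field_simps)
      have "E powr (1 - p) = eps powr (1 - p) * (1 + (\<Sum>j\<in>Basis - {b}. (x \<bullet> j)^2 / eps)) powr (- (p - 1))"
        unfolding Ee by (subst powr_mult) (use e in \<open>auto simp: add_pos_nonneg sum_nonneg\<close>)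
      also have "(1 + (\<Sum>j\<in>Basis - {b}. (x \<bullet> j)^2 / eps)) powr (- (p - 1)) \<le> (\<Prod>j\<in>Basis - {b}. (1 + (x \<bullet> j)^2 / eps) powr (-q))"
      proof (cases "Basis - {b} = ({} :: 'a set)")
        case True then show ?thesis by (simp only: True sum.empty prod.empty) simp
      next
        case False
        have "(1 + (\<Sum>j\<in>Basis - {b}. (x \<bullet> j)^2 / eps)) powr (- (p - 1)) \<le> (\<Prod>j\<in>Basis - {b}. (1 + (x \<bullet> j)^2 / eps) powr (- ((p - 1) / card (Basis - {b} :: 'a set))))"
          by (rule prod_ineq) (use False e p in auto)
        also have "real (card (Basis - {b} :: 'a set)) = real DIM('a) - 1"
          unfolding cardS using DIM_positive[where 'a='a] by (simp add: of_nat_diff)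
        finally show ?thesis unfolding q_def .
      qed
      then have "eps powr (1 - p) * (1 + (\<Sum>j\<in>Basis - {b}. (x \<bullet> j)^2 / eps)) powr (- (p - 1)) \<le> eps powr (1 - p) * (\<Prod>j\<in>Basis - {b}. (1 + (x \<bullet> j)^2 / eps) powr (-q))"
        by (intro mult_left_mono) auto
      finally show ?thesis .
    qed
    note that = this
    have i2: "2 * (E powr (1 - p) / ((2 * \<bar>y \<bullet> b\<bar>) * (p - 1))) \<le> C0 * (\<Prod>j\<in>Basis - {b}. (1 + (x \<bullet> j)^2 / eps) powr (-q))"
    proof -
      let ?P = "(\<Prod>j\<in>Basis - {b}. (1 + (x \<bullet> j)^2 / eps) powr (-q))"
      have d: "\<bar>y \<bullet> b\<bar> * (p - 1) > 0" using yb p by simp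
      have "2 * (E powr (1 - p) / ((2 * \<bar>y \<bullet> b\<bar>) * (p - 1))) = E powr (1 - p) / (\<bar>y \<bullet> b\<bar> * (p - 1))"
        by simp
      also have "\<dots> \<le> (eps powr (1 - p) * ?P) / (\<bar>y \<bullet> b\<bar> * (p - 1))"
        by (rule divide_right_mono[OF that]) (use d in simp)
      also have "\<dots> = C0 * ?P" unfolding C0_def by simp
      finally show ?thesis .
    qed
    have "indicator {0..1} (x \<bullet> b) * (\<integral>\<^sup>+s. ?f (x + s *\<^sub>R b) \<partial>lborel)
        \<le> indicator {0..1} (x \<bullet> b) * ennreal (C0 * (\<Prod>j\<in>Basis - {b}. (1 + (x \<bullet> j)^2 / eps) powr (-q)))"
      by (intro mult_left_mono order.trans[OF i1] ennreal_leI i2) simp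
    also have "\<dots> = ennreal C0 * (\<Prod>j\<in>Basis. g j (x \<bullet> j))"
    proof -
      have "(\<Prod>j\<in>Basis. g j (x \<bullet> j)) = (\<Prod>j\<in>Basis. if j = b then indicator {0..1} (x \<bullet> b) else ennreal ((1 + (x \<bullet> j)^2 / eps) powr (-q)))"
        unfolding g_def by (rule prod.cong) auto
      also have "\<dots> = indicator {0..1} (x \<bullet> b) * (\<Prod>j\<in>Basis - {b}. ennreal ((1 + (x \<bullet> j)^2 / eps) powr (-q)))"
        by (rule prod_remove_if[OF b])
      also have "\<dots> = indicator {0..1} (x \<bullet> b) * ennreal (\<Prod>j\<in>Basis - {b}. (1 + (x \<bullet> j)^2 / eps) powr (-q))"
        by (subst prod_ennreal) auto
      moreover have Pnn: "(\<Prod>j\<in>Basis - {b}. (1 + (x \<bullet> j)^2 / eps) powr (-q)) \<ge> 0" by (simp add: prod_nonneg)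
      ultimately show ?thesis by (simp add: ennreal_mult[OF C0 Pnn] mult_ac)
    qed
    finally show "indicator {0..1} (x \<bullet> b) * (\<integral>\<^sup>+s. ?f (x + s *\<^sub>R b) \<partial>lborel) \<le> ennreal C0 * (\<Prod>j\<in>Basis. g j (x \<bullet> j))" .
  qed
  also have "\<dots> = ennreal C0 * (\<integral>\<^sup>+x. (\<Prod>j\<in>Basis. g j (x \<bullet> j)) \<partial>lborel)"
    by (rule nn_integral_cmult) (unfold g_def, measurable)
  also have "\<dots> \<le> ennreal C0 * (\<Prod>j\<in>Basis. if j = b then 1 else ennreal (Q * sqrt eps))"
  proof (intro mult_left_mono prod_int_le)
    fix j :: 'a assume j: "j \<in> Basis"
    show "g j \<in> borel_measurable borel" unfolding g_def by measurable
    show "(\<integral>\<^sup>+t. g j t \<partial>lborel) \<le> (if j = b then 1 else ennreal (Q * sqrt eps))"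
    proof (cases "j = b")
      case True then show ?thesis unfolding g_def by simp
    next
      case False
      then have "DIM('a) \<noteq> 1" using j b by (metis card_1_singletonE finite_Basis singletonD)
      then have "q > 1/2" unfolding q_def using qass by simp
      then have qq: "q > 1/2" .
      have eqQ: "2 * (2 powr q * sqrt eps / (2*q - 1)) = Q * sqrt eps" unfolding Q_def by simp
      show ?thesis unfolding g_def using False Q1[OF e qq] unfolding eqQ by simp
    qed
  qed simp
  also have "(\<Prod>j\<in>Basis. if j = b then 1 else ennreal (Q * sqrt eps)) = ennreal (Q * sqrt eps) ^ (DIM('a) - 1)"
    using prod_remove_if[OF b, of 1 "\<lambda>_. ennreal (Q * sqrt eps)"] cardS by simp
  finally show ?thesis unfolding C0_def .
qed


lemma J0_finite:
  fixes p :: real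
  assumes p: "p > real DIM('a) / 2"
  shows "(\<integral>\<^sup>+x. ennreal ((1 + norm (x::'a::euclidean_space) ^ 2) powr (-p)) \<partial>lborel) < \<infinity>"
proof -
  define q where "q = p / real DIM('a)"
  have q: "q > 1/2" unfolding q_def using p by (simp add: field_simps)
  have p0: "p \<ge> 0" using p by (smt (verit) divide_nonneg_pos of_nat_0_le_iff)
  have "(\<integral>\<^sup>+x. ennreal ((1 + norm (x::'a) ^ 2) powr (-p)) \<partial>lborel)
      \<le> (\<integral>\<^sup>+x. (\<Prod>j\<in>Basis. ennreal ((1 + ((x::'a) \<bullet> j)^2 / 1) powr (-q))) \<partial>lborel)"
  proof (intro nn_integral_mono)
    fix x :: 'a
    have "(1 + norm x ^ 2) powr (-p) \<le> (\<Prod>j\<in>Basis. (1 + (x \<bullet> j)^2) powr (- (p / card (Basis :: 'a set))))"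
      unfolding norm_sq_sum by (rule prod_ineq) (use p0 in auto)
    then show "ennreal ((1 + norm x ^ 2) powr (-p)) \<le> (\<Prod>j\<in>Basis. ennreal ((1 + (x \<bullet> j)^2 / 1) powr (-q)))"
      unfolding q_def by (subst prod_ennreal) (auto intro!: ennreal_leI)
  qed
  also have "\<dots> \<le> (\<Prod>j\<in>(Basis::'a set). ennreal (2 * (2 powr q * sqrt 1 / (2*q - 1))))"
    by (rule prod_int_le[where g="\<lambda>j t. ennreal ((1 + t^2 / 1) powr (-q))"]) (use Q1[OF _ q, of 1] in auto)
  also have "\<dots> < \<infinity>"
  proof -
    have "2 * (2 powr q * sqrt 1 / (2*q - 1)) \<ge> 0" using q by simp
    then show ?thesis by (simp add: ennreal_power del: real_sqrt_one)
  qed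
  finally show ?thesis .
qed

lemma sq_sum_le: "((u::real) + v)^2 \<le> 2 * u^2 + 2 * v^2"
proof -
  have "0 \<le> (u - v)^2" by simp
  then show ?thesis by (simp add: power2_eq_square algebra_simps)
qed

lemma h_upper:
  fixes x y b :: "'a::euclidean_space" and eps s :: real
  assumes b: "b \<in> Basis" and yb: "4 * real DIM('a) * (y \<bullet> b)^2 \<ge> 1" and y1: "norm y \<le> 1"
    and e: "0 < eps" "eps \<le> 1"
    and xw: "\<And>j. j \<in> Basis - {b} \<Longrightarrow> \<bar>x \<bullet> j\<bar> \<le> sqrt eps / real DIM('a)"
    and s: "\<bar>s - (- (x \<bullet> y) / (y \<bullet> b))\<bar> \<le> eps"
  shows "eps + norm (x + s *\<^sub>R b) ^ 2 + 2 * \<bar>(x + s *\<^sub>R b) \<bullet> y\<bar> \<le> (8 * real DIM('a) + 6) * eps"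
proof -
  define n where "n = real DIM('a)"
  have n1: "n \<ge> 1" unfolding n_def using DIM_positive[where 'a='a] by linarith
  define a where "a = y \<bullet> b"
  define s0 where "s0 = - (x \<bullet> y) / a"
  define S' where "S' = (\<Sum>j\<in>Basis - {b}. (x \<bullet> j) * (y \<bullet> j))"
  define w where "w = sqrt eps / n"
  have w0: "w \<ge> 0" unfolding w_def using n1 e by simp
  have a0: "a \<noteq> 0" using yb unfolding a_def by auto
  have a2: "1 / a^2 \<le> 4 * n" using yb a0 unfolding a_def n_def by (simp add: field_simps)
  have ab: "\<bar>a\<bar> \<le> 1" unfolding a_def using Basis_le_norm[OF b, of y] y1 by (simp add: inner_commute)
  have card: "real (card (Basis - {b} :: 'a set)) \<le> n" unfolding n_def using b by simp
  have nw: "n * w = sqrt eps" unfolding w_def using n1 by simp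
  have nw2: "n * w^2 \<le> eps"
  proof -
    have "n * w^2 = eps / n" unfolding w_def using n1 e by (simp add: power_divide field_simps power2_eq_square)
    also have "\<dots> \<le> eps" using n1 e by (simp add: divide_le_eq)
    finally show ?thesis .
  qed
  have ip: "(x + s *\<^sub>R b) \<bullet> y = a * (s - s0)"
  proof -
    have "(x + s *\<^sub>R b) \<bullet> y = x \<bullet> y + s * a" unfolding a_def by (simp add: inner_add_left inner_commute[of b y])
    then show ?thesis unfolding s0_def using a0 by (simp add: field_simps)
  qed
  have t1: "2 * \<bar>(x + s *\<^sub>R b) \<bullet> y\<bar> \<le> 2 * eps"
  proof -
    have "\<bar>s - s0\<bar> \<le> eps" using s unfolding s0_def a_def .
    then have "\<bar>a\<bar> * \<bar>s - s0\<bar> \<le> 1 * eps" by (intro mult_mono ab) auto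
    then show ?thesis unfolding ip abs_mult by simp
  qed
  have sq: "(\<Sum>j\<in>Basis - {b}. ((x + s *\<^sub>R b) \<bullet> j)^2) \<le> eps"
  proof -
    have "(\<Sum>j\<in>Basis - {b}. ((x + s *\<^sub>R b) \<bullet> j)^2) = (\<Sum>j\<in>Basis - {b}. (x \<bullet> j)^2)"
      using inner_shift[OF b] by simp
    also have "\<dots> \<le> (\<Sum>j\<in>Basis - {b}. w^2)"
    proof (intro sum_mono)
      fix j assume j: "j \<in> Basis - {b}"
      have "\<bar>x \<bullet> j\<bar> \<le> w" using xw[OF j] unfolding w_def n_def .
      then show "(x \<bullet> j)^2 \<le> w^2" by (metis abs_ge_zero power2_abs power_mono)
    qed
    also have "\<dots> = real (card (Basis - {b} :: 'a set)) * w^2" by simp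
    also have "\<dots> \<le> n * w^2" by (rule mult_right_mono[OF card]) simp
    finally show ?thesis using nw2 by linarith
  qed
  have S'b: "\<bar>S'\<bar> \<le> sqrt eps"
  proof -
    have "\<bar>S'\<bar> \<le> (\<Sum>j\<in>Basis - {b}. \<bar>x \<bullet> j\<bar> * \<bar>y \<bullet> j\<bar>)" unfolding S'_def
      by (rule order.trans[OF sum_abs]) (simp add: abs_mult)
    also have "\<dots> \<le> (\<Sum>j\<in>Basis - {b}. w)"
    proof (intro sum_mono)
      fix j assume j: "j \<in> Basis - {b}"
      have "\<bar>y \<bullet> j\<bar> \<le> 1" using Basis_le_norm[of j y] j y1 by (simp add: inner_commute)
      then show "\<bar>x \<bullet> j\<bar> * \<bar>y \<bullet> j\<bar> \<le> w"
        using xw[OF j] unfolding w_def n_def by (metis abs_ge_zero mult_left_le order_trans)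
    qed
    also have "\<dots> = real (card (Basis - {b} :: 'a set)) * w" by simp
    also have "\<dots> \<le> n * w" by (rule mult_right_mono[OF card w0])
    finally show ?thesis using nw by simp
  qed
  have xb: "x \<bullet> b + s0 = - S' / a"
    unfolding s0_def S'_def using inner_sum_split[OF b, of x y] a0 unfolding a_def by (simp add: field_simps)
  have t2: "((x + s *\<^sub>R b) \<bullet> b)^2 \<le> (8 * n + 2) * eps"
  proof -
    have "((x + s *\<^sub>R b) \<bullet> b) = (- S' / a) + (s - s0)" using inner_shift_b[OF b, of x s] xb by simp
    then have "((x + s *\<^sub>R b) \<bullet> b)^2 \<le> 2 * (S'^2 / a^2) + 2 * (s - s0)^2"
      using sq_sum_le[of "- S' / a" "s - s0"] by (simp add: power_divide)
    also have "\<dots> \<le> 2 * (eps * (4 * n)) + 2 * eps^2"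
    proof (intro add_mono mult_left_mono)
      have "\<bar>S'\<bar>^2 \<le> (sqrt eps)^2" by (rule power_mono[OF S'b]) simp
      then have "S'^2 \<le> eps" using e by simp
      then have "S'^2 * (1 / a^2) \<le> eps * (4 * n)" by (intro mult_mono a2) (use e in auto)
      then show "S'^2 / a^2 \<le> eps * (4 * n)" by simp
      have "\<bar>s - s0\<bar> \<le> eps" using s unfolding s0_def a_def .
      then show "(s - s0)^2 \<le> eps^2" by (metis abs_ge_zero abs_power2 power_mono power2_abs)
    qed auto
    also have "\<dots> \<le> (8 * n + 2) * eps" using e by (simp add: power2_eq_square algebra_simps mult_left_le_one_le)
    finally show ?thesis .
  qed
  have "norm (x + s *\<^sub>R b) ^ 2 \<le> (8 * n + 2) * eps + eps"
    using norm_sq_split[OF b, of "x + s *\<^sub>R b"] sq t2 by linarith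
  moreover have "(8 * real DIM('a) + 6) * eps = (8 * real DIM('a) + 2) * eps + 4 * eps" by (simp add: algebra_simps)
  ultimately show ?thesis using t1 unfolding n_def by linarith
qed

lemma J_lower:
  fixes y b :: "'a::euclidean_space" and eps p :: real
  assumes b: "b \<in> Basis" and yb: "4 * real DIM('a) * (y \<bullet> b)^2 \<ge> 1" and y1: "norm y \<le> 1"
    and e: "0 < eps" "eps \<le> 1" and p: "p > 0"
  shows "ennreal (2 * eps * ((8 * real DIM('a) + 6) * eps) powr (-p)) * ennreal (2 * (sqrt eps / real DIM('a))) ^ (DIM('a) - 1)
    \<le> (\<integral>\<^sup>+x. ennreal ((eps + norm x ^ 2 + 2 * \<bar>x \<bullet> y\<bar>) powr (-p)) \<partial>lborel)"
proof -
  define w where "w = sqrt eps / real DIM('a)"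
  have w0: "w \<ge> 0" unfolding w_def using e by simp
  define D where "D = 8 * real DIM('a) + 6"
  have D: "D > 0" unfolding D_def by simp
  define K where "K = 2 * eps * (D * eps) powr (-p)"
  have K0: "K \<ge> 0" unfolding K_def using e by simp
  define g where "g j t = (if j = b then indicator {0..1} t else indicator {-w..w} t :: ennreal)" for j :: 'a and t :: real
  have gm: "g j \<in> borel_measurable borel" for j unfolding g_def by measurable
  let ?f = "\<lambda>x::'a. ennreal ((eps + norm x ^ 2 + 2 * \<bar>x \<bullet> y\<bar>) powr (-p))"
  have ints: "(\<Prod>j\<in>Basis. (\<integral>\<^sup>+t. g j t \<partial>lborel)) = ennreal (2 * w) ^ (DIM('a) - 1)"
  proof -
    have "(\<Prod>j\<in>Basis. (\<integral>\<^sup>+t. g j t \<partial>lborel)) = (\<Prod>j\<in>Basis. if j = b then 1 else ennreal (2 * w))"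
    proof (rule prod.cong)
      fix j :: 'a
      have "(\<integral>\<^sup>+t. indicator {-w..w} t \<partial>lborel) = ennreal (2 * w)" using w0 by simp
      then show "(\<integral>\<^sup>+t. g j t \<partial>lborel) = (if j = b then 1 else ennreal (2 * w))"
        unfolding g_def by simp
    qed simp
    also have "\<dots> = ennreal (2 * w) ^ (DIM('a) - 1)"
      using prod_remove_if[OF b, of 1 "\<lambda>_. ennreal (2 * w)"] b by simp
    finally show ?thesis .
  qed
  have "ennreal K * ennreal (2 * w) ^ (DIM('a) - 1) = ennreal K * (\<integral>\<^sup>+x. (\<Prod>j\<in>Basis. g j (x \<bullet> j)) \<partial>lborel)"
    by (subst prod_int_eq[OF gm]) (simp add: ints)
  also have "\<dots> = (\<integral>\<^sup>+x. ennreal K * (\<Prod>j\<in>Basis. g j (x \<bullet> j)) \<partial>lborel)"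
    by (rule nn_integral_cmult[symmetric]) (unfold g_def, measurable)
  also have "\<dots> \<le> (\<integral>\<^sup>+x. indicator {0..1} (x \<bullet> b) * (\<integral>\<^sup>+s. ?f (x + s *\<^sub>R b) \<partial>lborel) \<partial>lborel)"
  proof (intro nn_integral_mono)
    fix x :: 'a
    show "ennreal K * (\<Prod>j\<in>Basis. g j (x \<bullet> j)) \<le> indicator {0..1} (x \<bullet> b) * (\<integral>\<^sup>+s. ?f (x + s *\<^sub>R b) \<partial>lborel)"
    proof (cases "\<forall>j\<in>Basis - {b}. \<bar>x \<bullet> j\<bar> \<le> w")
      case True
      have pr: "(\<Prod>j\<in>Basis. g j (x \<bullet> j)) = indicator {0..1} (x \<bullet> b)"
      proof -
        have "(\<Prod>j\<in>Basis. g j (x \<bullet> j)) = (\<Prod>j\<in>Basis. if j = b then indicator {0..1} (x \<bullet> b) else 1)"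
        proof (rule prod.cong)
          fix j :: 'a assume jB: "j \<in> Basis"
          show "g j (x \<bullet> j) = (if j = b then indicator {0..1} (x \<bullet> b) else 1)"
          proof (cases "j = b")
            case False
            then have "\<bar>x \<bullet> j\<bar> \<le> w" using True jB by blast
            then have "x \<bullet> j \<in> {-w..w}" by (auto simp: abs_le_iff)
            then show ?thesis unfolding g_def using False by simp
          qed (simp add: g_def)
        qed simp
        also have "\<dots> = indicator {0..1} (x \<bullet> b)"
          using prod_remove_if[OF b, of "indicator {0..1} (x \<bullet> b)" "\<lambda>_. 1"] by simp
        finally show ?thesis .
      qed
      define s0 where "s0 = - (x \<bullet> y) / (y \<bullet> b)"
      have "ennreal K = ennreal ((D * eps) powr (-p)) * ennreal (2 * eps)"
        unfolding K_def using e by (simp add: ennreal_mult[symmetric] mult_ac)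
      also have "\<dots> = (\<integral>\<^sup>+s. ennreal ((D * eps) powr (-p)) * indicator {s0 - eps .. s0 + eps} s \<partial>lborel)"
        using e by (simp add: nn_integral_cmult_indicator)
      also have "\<dots> \<le> (\<integral>\<^sup>+s. ?f (x + s *\<^sub>R b) \<partial>lborel)"
      proof (intro nn_integral_mono)
        fix s :: real
        show "ennreal ((D * eps) powr (-p)) * indicator {s0 - eps .. s0 + eps} s \<le> ?f (x + s *\<^sub>R b)"
        proof (cases "s \<in> {s0 - eps .. s0 + eps}")
          case True
          then have ss: "\<bar>s - (- (x \<bullet> y) / (y \<bullet> b))\<bar> \<le> eps" unfolding s0_def by (auto simp: abs_le_iff)
          have hu: "eps + norm (x + s *\<^sub>R b) ^ 2 + 2 * \<bar>(x + s *\<^sub>R b) \<bullet> y\<bar> \<le> D * eps"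
            unfolding D_def by (rule h_upper[OF b yb y1 e _ ss]) (use \<open>\<forall>j\<in>Basis - {b}. \<bar>x \<bullet> j\<bar> \<le> w\<close> in \<open>auto simp: w_def\<close>)
          have hp: "0 < eps + norm (x + s *\<^sub>R b) ^ 2 + 2 * \<bar>(x + s *\<^sub>R b) \<bullet> y\<bar>" using e by (simp add: add_pos_nonneg)
          have "(D * eps) powr (-p) \<le> (eps + norm (x + s *\<^sub>R b) ^ 2 + 2 * \<bar>(x + s *\<^sub>R b) \<bullet> y\<bar>) powr (-p)"
            by (rule powr_mono2'[OF _ hp hu]) (use p in auto)
          then show ?thesis using True by (simp add: ennreal_leI)
        qed simp
      qed
      finally have Ki: "ennreal K \<le> (\<integral>\<^sup>+s. ?f (x + s *\<^sub>R b) \<partial>lborel)" .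
      show ?thesis unfolding pr using mult_left_mono[OF Ki, of "indicator {0..1} (x \<bullet> b)"] by (simp add: mult.commute)
    next
      case False
      then obtain j where j: "j \<in> Basis - {b}" "\<bar>x \<bullet> j\<bar> > w" by (meson not_le)
      have "g j (x \<bullet> j) = 0" unfolding g_def using j by (auto simp: indicator_def abs_le_iff)
      then have P0: "(\<Prod>j\<in>Basis. g j (x \<bullet> j)) = 0" using j by (intro prod_zero) auto
      show ?thesis by (simp only: P0 mult_zero_right zero_le)
    qed
  qed
  also have "\<dots> = (\<integral>\<^sup>+x. ?f x \<partial>lborel)"
    by (rule section_formula[OF b, symmetric]) measurable
  finally show ?thesis unfolding K_def D_def w_def .
qed


lemma exists_big_coord:
  fixes y :: "'a::euclidean_space"
  shows "\<exists>b\<in>Basis. norm y ^ 2 \<le> real DIM('a) * (y \<bullet> b)^2"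
proof -
  define M where "M = Max ((\<lambda>j. (y \<bullet> j)^2) ` (Basis :: 'a set))"
  have "M \<in> (\<lambda>j. (y \<bullet> j)^2) ` (Basis :: 'a set)" unfolding M_def by (rule Max_in) auto
  then obtain b where b: "b \<in> Basis" "M = (y \<bullet> b)^2" by auto
  have "norm y ^ 2 = (\<Sum>j\<in>Basis. (y \<bullet> j)^2)" by (rule norm_sq_sum)
  also have "\<dots> \<le> (\<Sum>j\<in>(Basis::'a set). M)" unfolding M_def by (intro sum_mono Max_ge) auto
  also have "\<dots> = real DIM('a) * (y \<bullet> b)^2" using b by simp
  finally show ?thesis using b by auto
qed

lemma sqrt_pow_powr: "x > 0 \<Longrightarrow> sqrt x ^ k = x powr (real k / 2)"
  by (simp add: powr_half_sqrt[symmetric] powr_realpow[symmetric] powr_powr)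

lemma J1_final:
  fixes y :: "'a::euclidean_space" and \<beta> :: real
  assumes y: "1/2 \<le> norm y" "norm y < 1" and \<beta>: "\<beta> > 0"
  defines "m' \<equiv> \<beta> + (real DIM('a) + 1) / 2"
  defines "q \<equiv> (m' - 1) / (real DIM('a) - 1)"
  defines "Q \<equiv> 2 * (2 powr q / (2 * q - 1))"
  shows "(\<integral>\<^sup>+x. ennreal (((1 - norm y ^ 2) + norm x ^ 2 + 2 * \<bar>x \<bullet> y\<bar>) powr (-m')) \<partial>lborel)
     \<le> ennreal (2 * real DIM('a) * Q ^ (DIM('a) - 1) / (m' - 1) * (1 - norm y ^ 2) powr (-\<beta>))"
proof -
  define n where "n = real DIM('a)"
  have n1: "n \<ge> 1" unfolding n_def using DIM_positive[where 'a='a] by linarith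
  define eps where "eps = 1 - norm y ^ 2"
  have e: "eps > 0" unfolding eps_def using y by (simp add: abs_square_less_1)
  obtain b where b: "b \<in> Basis" and yb: "norm y ^ 2 \<le> n * (y \<bullet> b)^2"
    using exists_big_coord[of y] unfolding n_def by auto
  have y2: "1/4 \<le> norm y ^ 2" using power_mono[OF y(1), of 2] by (simp add: power_divide)
  have yb2: "(y \<bullet> b)^2 \<ge> 1 / (4 * n)" using yb y2 n1 by (simp add: field_simps)
  have ybn: "y \<bullet> b \<noteq> 0" using yb2 n1 by (auto simp: field_simps)
  have inv: "1 / \<bar>y \<bullet> b\<bar> \<le> 2 * n"
  proof -
    have "(1 / (2 * n))^2 \<le> 1 / (4 * n)"
      using n1 by (simp add: power2_eq_square field_simps)
    then have "(1 / (2 * n))^2 \<le> \<bar>y \<bullet> b\<bar>^2" using yb2 by simp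
    then have "1 / (2 * n) \<le> \<bar>y \<bullet> b\<bar>" by (rule power2_le_imp_le) simp
    then show ?thesis using n1 ybn by (simp add: field_simps)
  qed
  have m1: "m' > 1"
  proof -
    have "(real DIM('a) + 1) / 2 \<ge> 1" using n1 unfolding n_def by simp
    then show ?thesis unfolding m'_def using \<beta> by linarith
  qed
  have qass: "(m' - 1) / (real DIM('a) - 1) > 1/2" if "DIM('a) \<noteq> 1"
  proof -
    have "real DIM('a) > 1" using that DIM_positive[where 'a='a] by linarith
    then show ?thesis unfolding m'_def using \<beta> by (simp add: field_simps)
  qed
  have Q0: "Q \<ge> 0" if "DIM('a) \<noteq> 1"
  proof -
    have "q > 1/2" using qass[OF that] unfolding q_def by simp
    then have "2 * q - 1 > 0" by simp
    then show ?thesis unfolding Q_def by simp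
  qed
  have Qp: "Q ^ (DIM('a) - 1) \<ge> 0" using Q0 by (cases "DIM('a) = 1") auto
  have "(\<integral>\<^sup>+x. ennreal ((eps + norm x ^ 2 + 2 * \<bar>x \<bullet> y\<bar>) powr (-m')) \<partial>lborel)
     \<le> ennreal (eps powr (1 - m') / (\<bar>y \<bullet> b\<bar> * (m' - 1))) * ennreal (Q * sqrt eps) ^ (DIM('a) - 1)"
    unfolding Q_def q_def by (rule J1_bound[OF b ybn e m1 qass])
  also have "\<dots> = ennreal (eps powr (1 - m') / (\<bar>y \<bullet> b\<bar> * (m' - 1)) * (Q ^ (DIM('a) - 1) * eps powr ((n - 1) / 2)))"
  proof -
    have "ennreal (Q * sqrt eps) ^ (DIM('a) - 1) = ennreal ((Q * sqrt eps) ^ (DIM('a) - 1))"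
      using Q0 e by (cases "DIM('a) = 1") (auto simp: ennreal_power)
    also have "(Q * sqrt eps) ^ (DIM('a) - 1) = Q ^ (DIM('a) - 1) * eps powr ((n - 1) / 2)"
      using e n1 by (simp add: power_mult_distrib sqrt_pow_powr n_def of_nat_diff)
    moreover have nn1: "eps powr (1 - m') / (\<bar>y \<bullet> b\<bar> * (m' - 1)) \<ge> 0" using m1 by simp
    moreover have nn2: "Q ^ (DIM('a) - 1) * eps powr ((n - 1) / 2) \<ge> 0" using Qp by simp
    ultimately show ?thesis by (simp only: ennreal_mult[OF nn1 nn2])
  qed
  also have "\<dots> \<le> ennreal (2 * real DIM('a) * Q ^ (DIM('a) - 1) / (m' - 1) * eps powr (-\<beta>))"
  proof (intro ennreal_leI)
    note Q0 = Qp
    have ex: "eps powr (1 - m') * eps powr ((n - 1) / 2) = eps powr (-\<beta>)"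
      unfolding m'_def n_def by (simp add: powr_add[symmetric] field_simps)
    have "eps powr (1 - m') / (\<bar>y \<bullet> b\<bar> * (m' - 1)) * (Q ^ (DIM('a) - 1) * eps powr ((n - 1) / 2))
        = (1 / \<bar>y \<bullet> b\<bar>) * (Q ^ (DIM('a) - 1) / (m' - 1) * eps powr (-\<beta>))"
      using ex m1 ybn by (simp add: field_simps)
    also have "\<dots> \<le> (2 * n) * (Q ^ (DIM('a) - 1) / (m' - 1) * eps powr (-\<beta>))"
      by (rule mult_right_mono[OF inv]) (use Q0 m1 in simp)
    finally show "eps powr (1 - m') / (\<bar>y \<bullet> b\<bar> * (m' - 1)) * (Q ^ (DIM('a) - 1) * eps powr ((n - 1) / 2))
        \<le> 2 * real DIM('a) * Q ^ (DIM('a) - 1) / (m' - 1) * eps powr (-\<beta>)" unfolding n_def by simp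
  qed
  finally show ?thesis unfolding eps_def .
qed

lemma pw_split:
  fixes h t m m' :: real
  assumes h: "h > 0" "t \<le> h" "0 \<le> t" and m: "0 \<le> m" "m \<le> m'"
  shows "h powr (-m) \<le> h powr (-m') + 2 powr m * (1 + t) powr (-m)"
proof (cases "h \<le> 1")
  case True
  have "h powr (-m) \<le> h powr (-m')" by (rule powr_mono') (use m h True in auto)
  then show ?thesis by (smt (verit) powr_ge_zero mult_nonneg_nonneg)
next
  case False
  have "h powr (-m) \<le> ((1 + t) / 2) powr (-m)"
    by (rule powr_mono2') (use m h False in auto)
  also have "\<dots> = 2 powr m * (1 + t) powr (-m)"
    using h by (simp add: powr_divide powr_minus divide_simps)
  finally show ?thesis by (smt (verit) powr_ge_zero)
qed

lemma L1_upper: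
  fixes lam :: complex and \<beta> :: real
  assumes lam: "Re lam > 0" and \<beta>: "\<beta> > 0" and \<beta>s: "Re lam - 1/2 \<le> \<beta>"
  shows "\<exists>M\<ge>0. \<forall>y::'a::euclidean_space. norm y < 1 \<longrightarrow> L1norm (delta lam y) \<le> ennreal (M * (1 - norm y ^ 2) powr (-\<beta>))"
proof -
  define n where "n = real DIM('a)"
  have n1: "n \<ge> 1" unfolding n_def using DIM_positive[where 'a='a] by linarith
  define m where "m = Re lam + real DIM('a) / 2"
  define m' where "m' = \<beta> + (real DIM('a) + 1) / 2"
  have m0: "m > 0" unfolding m_def using lam by (simp add: add_pos_nonneg)
  have mm: "m \<le> m'" unfolding m_def m'_def using \<beta>s by (simp add: field_simps)
  have mn: "m > real DIM('a) / 2" unfolding m_def using lam by simp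
  have mn': "m' > real DIM('a) / 2" unfolding m'_def using \<beta> by (simp add: field_simps)
  define K where "K = norm (inverse (cconst DIM('a) lam))"
  define c2 where "c2 = K * exp (pi * \<bar>Im lam\<bar>) * 2 powr m"
  have c2: "c2 \<ge> 0" unfolding c2_def K_def by simp
  define J0 where "J0 = (\<integral>\<^sup>+x. ennreal ((1 + norm (x::'a) ^ 2) powr (-m)) \<partial>lborel)"
  define J0' where "J0' = (\<integral>\<^sup>+x. ennreal ((1 + norm (x::'a) ^ 2) powr (-m')) \<partial>lborel)"
  have J0f: "J0 < \<infinity>" unfolding J0_def by (rule J0_finite[OF mn])
  have J0f': "J0' < \<infinity>" unfolding J0'_def by (rule J0_finite[OF mn'])
  define j0 where "j0 = enn2real J0"
  define j0' where "j0' = enn2real J0'"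
  have J0e: "J0 = ennreal j0" unfolding j0_def using J0f by (simp add: less_top)
  have J0e': "J0' = ennreal j0'" unfolding j0'_def using J0f' by (simp add: less_top)
  have j0: "j0 \<ge> 0" "j0' \<ge> 0" unfolding j0_def j0'_def by auto
  define q where "q = (m' - 1) / (real DIM('a) - 1)"
  define Q where "Q = 2 * (2 powr q / (2 * q - 1))"
  define A where "A = max (2 * real DIM('a) * Q ^ (DIM('a) - 1) / (m' - 1)) 0 + (4/3) powr m' * j0'"
  have A: "A \<ge> 0" unfolding A_def using j0 by simp
  define M where "M = c2 * (A + 2 powr m * j0)"
  have M: "M \<ge> 0" unfolding M_def using c2 A j0 by simp
  show ?thesis
  proof (intro exI[of _ M] conjI allI impI M)
    fix y :: 'a assume y: "norm y < 1"
    define eps where "eps = 1 - norm y ^ 2"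
    have e: "eps > 0" "eps \<le> 1" unfolding eps_def using y by (auto simp: abs_square_less_1)
    have eb: "eps powr (-\<beta>) \<ge> 1"
    proof -
      have "eps powr \<beta> \<le> 1 powr \<beta>" by (rule powr_mono2) (use e \<beta> in auto)
      then have "eps powr \<beta> \<le> 1" by simp
      moreover have "eps powr \<beta> > 0" using e by simp
      ultimately show ?thesis by (simp add: powr_minus one_le_inverse)
    qed
    let ?h = "\<lambda>x::'a. eps + norm x ^ 2 + 2 * \<bar>x \<bullet> y\<bar>"
    have hpos: "?h x > 0" for x using e by (simp add: add_pos_nonneg)
    have I1: "(\<integral>\<^sup>+x. ennreal (?h x powr (-m')) \<partial>lborel) \<le> ennreal (A * eps powr (-\<beta>))"
    proof (cases "1/2 \<le> norm y")
      case True
      have "(\<integral>\<^sup>+x. ennreal (?h x powr (-m')) \<partial>lborel)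
          \<le> ennreal (2 * real DIM('a) * Q ^ (DIM('a) - 1) / (m' - 1) * eps powr (-\<beta>))"
        unfolding eps_def m'_def Q_def q_def using J1_final[OF True y \<beta>] by simp
      also have "\<dots> \<le> ennreal (A * eps powr (-\<beta>))"
      proof (intro ennreal_leI mult_right_mono)
        show "2 * real DIM('a) * Q ^ (DIM('a) - 1) / (m' - 1) \<le> A"
          unfolding A_def using j0 by (intro add_increasing2) auto
      qed simp
      finally show ?thesis .
    next
      case False
      have y2: "norm y ^ 2 \<le> 1/4"
      proof -
        have "norm y ^ 2 \<le> (1/2)^2" by (rule power_mono) (use False in auto)
        then show ?thesis by (simp add: power2_eq_square)
      qed
      have "(\<integral>\<^sup>+x. ennreal (?h x powr (-m')) \<partial>lborel) \<le> (\<integral>\<^sup>+x. ennreal ((4/3) powr m') * ennreal ((1 + norm (x::'a) ^ 2) powr (-m')) \<partial>lborel)"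
      proof (intro nn_integral_mono)
        fix x :: 'a
        have "3/4 * (1 + norm x ^ 2) \<le> ?h x"
        proof -
          have "0 \<le> norm x ^ 2" "0 \<le> \<bar>x \<bullet> y\<bar>" by simp_all
          moreover have "3/4 * (1 + norm x ^ 2) = 3/4 + 3/4 * norm x ^ 2" by simp
          ultimately show ?thesis using y2 unfolding eps_def by linarith
        qed
        then have "?h x powr (-m') \<le> (3/4 * (1 + norm x ^ 2)) powr (-m')"
          by (intro powr_mono2') (use mn' in \<open>auto simp: add_pos_nonneg\<close>)
        also have "\<dots> = (3/4) powr (-m') * (1 + norm x ^ 2) powr (-m')"
          by (rule powr_mult)
        also have "(3/4::real) powr (-m') = (4/3) powr m'"
          by (simp add: powr_minus powr_divide)
        finally have "?h x powr (-m') \<le> (4/3) powr m' * (1 + norm x ^ 2) powr (-m')" .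
        then show "ennreal (?h x powr (-m')) \<le> ennreal ((4/3) powr m') * ennreal ((1 + norm x ^ 2) powr (-m'))"
          by (simp add: ennreal_mult[symmetric] ennreal_leI)
      qed
      also have "\<dots> = ennreal ((4/3) powr m') * J0'" unfolding J0'_def by (rule nn_integral_cmult) measurable
      also have "\<dots> = ennreal ((4/3) powr m' * j0')" using j0 by (simp add: J0e' ennreal_mult)
      also have "\<dots> \<le> ennreal (A * eps powr (-\<beta>))"
      proof (intro ennreal_leI)
        have "(4/3) powr m' * j0' \<le> A" unfolding A_def by simp
        also have "A \<le> A * eps powr (-\<beta>)" using A eb by (simp add: mult_le_cancel_left1)
        finally show "(4/3) powr m' * j0' \<le> A * eps powr (-\<beta>)" .
      qed
      finally show ?thesis .
    qed
    have "L1norm (delta lam y) \<le> (\<integral>\<^sup>+x. ennreal (c2 * ?h x powr (-m)) \<partial>lborel)"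
      unfolding L1norm_def
      by (intro nn_integral_mono ennreal_leI) (use delta_bounds(2)[OF y lam] in \<open>simp add: eps_def c2_def K_def m_def\<close>)
    also have "\<dots> \<le> (\<integral>\<^sup>+x. ennreal c2 * ennreal (?h x powr (-m')) + ennreal (c2 * 2 powr m) * ennreal ((1 + norm x ^ 2) powr (-m)) \<partial>lborel)"
    proof (intro nn_integral_mono)
      fix x :: 'a
      have "?h x powr (-m) \<le> ?h x powr (-m') + 2 powr m * (1 + norm x ^ 2) powr (-m)"
        by (rule pw_split[OF hpos]) (use e m0 mm in auto)
      then have "c2 * ?h x powr (-m) \<le> c2 * ?h x powr (-m') + (c2 * 2 powr m) * (1 + norm x ^ 2) powr (-m)"
        using c2 by (simp add: mult_left_mono algebra_simps) (metis distrib_left mult.assoc mult_left_mono)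
      then show "ennreal (c2 * ?h x powr (-m)) \<le> ennreal c2 * ennreal (?h x powr (-m')) + ennreal (c2 * 2 powr m) * ennreal ((1 + norm x ^ 2) powr (-m))"
        using c2 by (simp add: ennreal_mult[symmetric] ennreal_plus[symmetric] del: ennreal_plus ennreal_leI)
    qed
    also have "\<dots> = ennreal c2 * (\<integral>\<^sup>+x. ennreal (?h x powr (-m')) \<partial>lborel) + ennreal (c2 * 2 powr m) * J0"
      unfolding J0_def by (subst nn_integral_add) (auto simp: nn_integral_cmult)
    also have "\<dots> \<le> ennreal c2 * ennreal (A * eps powr (-\<beta>)) + ennreal (c2 * 2 powr m) * ennreal (j0 * eps powr (-\<beta>))"
    proof (intro add_mono mult_left_mono I1)
      show "J0 \<le> ennreal (j0 * eps powr (-\<beta>))" unfolding J0e using j0 eb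
        by (intro ennreal_leI) (simp add: mult_le_cancel_left1)
    qed auto
    also have "\<dots> = ennreal (M * eps powr (-\<beta>))"
      unfolding M_def using c2 A j0 by (simp add: ennreal_mult[symmetric] ennreal_plus[symmetric] algebra_simps del: ennreal_plus)
    finally show "L1norm (delta lam y) \<le> ennreal (M * (1 - norm y ^ 2) powr (-\<beta>))" unfolding eps_def .
  qed
qed

lemma L1_lower:
  fixes lam :: complex
  assumes lam: "Re lam > 1/2"
  shows "\<exists>c>0. \<forall>y::'a::euclidean_space. 1/2 \<le> norm y \<and> norm y < 1 \<longrightarrow>
           ennreal (c * (1 - norm y ^ 2) powr (1/2 - Re lam)) \<le> L1norm (delta lam y)"
proof -
  have lam0: "Re lam > 0" using lam by simp
  define n where "n = real DIM('a)"
  have n1: "n \<ge> 1" unfolding n_def using DIM_positive[where 'a='a] by linarith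
  define m where "m = Re lam + real DIM('a) / 2"
  have m0: "m > 0" unfolding m_def using lam by (simp add: add_pos_nonneg)
  define K where "K = norm (inverse (cconst DIM('a) lam))"
  have K: "K > 0" unfolding K_def using cconst_nz[OF lam0] by simp
  define c1 where "c1 = K * exp (- pi * \<bar>Im lam\<bar>)"
  have c1: "c1 > 0" unfolding c1_def using K by simp
  define D where "D = 8 * real DIM('a) + 6"
  have D: "D > 0" unfolding D_def by simp
  define c where "c = c1 * (2 * D powr (-m) * (2 / n) ^ (DIM('a) - 1))"
  have c: "c > 0" unfolding c_def using c1 D n1 by simp
  show ?thesis
  proof (intro exI[of _ c] conjI allI impI c)
    fix y :: 'a assume y: "1/2 \<le> norm y \<and> norm y < 1"
    define eps where "eps = 1 - norm y ^ 2"
    have e: "eps > 0" "eps \<le> 1" unfolding eps_def using y by (auto simp: abs_square_less_1)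
    obtain b where b: "b \<in> Basis" and yb: "norm y ^ 2 \<le> n * (y \<bullet> b)^2"
      using exists_big_coord[of y] unfolding n_def by auto
    have y2: "1/4 \<le> norm y ^ 2" using power_mono[of "1/2" "norm y" 2] y by (simp add: power_divide)
    have yb4: "4 * real DIM('a) * (y \<bullet> b)^2 \<ge> 1" using yb y2 unfolding n_def by linarith
    have y1: "norm y \<le> 1" using y by simp
    let ?h = "\<lambda>x::'a. eps + norm x ^ 2 + 2 * \<bar>x \<bullet> y\<bar>"
    have Jl: "ennreal (2 * eps * (D * eps) powr (-m)) * ennreal (2 * (sqrt eps / n)) ^ (DIM('a) - 1)
        \<le> (\<integral>\<^sup>+x. ennreal (?h x powr (-m)) \<partial>lborel)"
      unfolding D_def n_def by (rule J_lower[OF b yb4 y1 e m0])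
    have eq: "ennreal (2 * eps * (D * eps) powr (-m)) * ennreal (2 * (sqrt eps / n)) ^ (DIM('a) - 1)
        = ennreal ((2 * D powr (-m) * (2 / n) ^ (DIM('a) - 1)) * eps powr (1/2 - Re lam))"
    proof -
      have "ennreal (2 * (sqrt eps / n)) ^ (DIM('a) - 1) = ennreal ((2 * (sqrt eps / n)) ^ (DIM('a) - 1))"
        using e n1 by (simp add: ennreal_power)
      also have "(2 * (sqrt eps / n)) ^ (DIM('a) - 1) = (2 / n) ^ (DIM('a) - 1) * eps powr ((n - 1) / 2)"
      proof -
        have "(2 * (sqrt eps / n)) = (2 / n) * sqrt eps" by simp
        then show ?thesis using e n1 by (simp only: power_mult_distrib sqrt_pow_powr[OF e(1)]) (simp add: n_def of_nat_diff)
      qed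
      finally have A: "ennreal (2 * (sqrt eps / n)) ^ (DIM('a) - 1) = ennreal ((2 / n) ^ (DIM('a) - 1) * eps powr ((n - 1) / 2))" .
      have B: "2 * eps * (D * eps) powr (-m) = 2 * D powr (-m) * eps powr (1 - m)"
        using e D by (simp add: powr_mult powr_diff powr_minus divide_simps)
      have ee: "1 - m + (n - 1) / 2 = 1/2 - Re lam" unfolding m_def n_def by (simp add: field_simps)
      have ex: "eps powr (1 - m) * eps powr ((n - 1) / 2) = eps powr (1/2 - Re lam)"
        by (simp only: powr_add[symmetric] ee)
      have nn1: "2 * eps * (D * eps) powr (-m) \<ge> 0" using e by simp
      have nn2: "(2 / n) ^ (DIM('a) - 1) * eps powr ((n - 1) / 2) \<ge> 0" using n1 by simp
      have "ennreal (2 * eps * (D * eps) powr (-m)) * ennreal (2 * (sqrt eps / n)) ^ (DIM('a) - 1)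
          = ennreal (2 * eps * (D * eps) powr (-m) * ((2 / n) ^ (DIM('a) - 1) * eps powr ((n - 1) / 2)))"
        unfolding A by (rule ennreal_mult[OF nn1 nn2, symmetric])
      also have "2 * eps * (D * eps) powr (-m) * ((2 / n) ^ (DIM('a) - 1) * eps powr ((n - 1) / 2))
          = (2 * D powr (-m) * (2 / n) ^ (DIM('a) - 1)) * (eps powr (1 - m) * eps powr ((n - 1) / 2))"
        unfolding B by (simp add: algebra_simps)
      finally show ?thesis unfolding ex .
    qed
    have "ennreal (c * eps powr (1/2 - Re lam)) = ennreal c1 * ennreal ((2 * D powr (-m) * (2 / n) ^ (DIM('a) - 1)) * eps powr (1/2 - Re lam))"
      unfolding c_def using c1 n1 by (simp add: ennreal_mult[symmetric] mult_ac)
    also have "\<dots> \<le> ennreal c1 * (\<integral>\<^sup>+x. ennreal (?h x powr (-m)) \<partial>lborel)"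
      using Jl unfolding eq by (rule mult_left_mono) simp
    also have "\<dots> = (\<integral>\<^sup>+x. ennreal (c1 * ?h x powr (-m)) \<partial>lborel)"
      using c1 by (subst nn_integral_cmult[symmetric]) (auto simp: ennreal_mult)
    also have "\<dots> \<le> L1norm (delta lam y)"
      unfolding L1norm_def
      by (intro nn_integral_mono ennreal_leI) (use delta_bounds(1)[of y lam] y lam0 in \<open>simp add: eps_def c1_def K_def m_def\<close>)
    finally show "ennreal (c * (1 - norm y ^ 2) powr (1/2 - Re lam)) \<le> L1norm (delta lam y)" unfolding eps_def .
  qed
qed


lemma wgt_eq: "wgt \<alpha> y = ((2 * pi) powr (- real DIM('a) / 2) / Gamma \<alpha>) * (1 - norm y ^ 2) powr (\<alpha> - 1)"
  for y :: "'a::euclidean_space"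
  unfolding wgt_def by simp

theorem mainTheorem11:
  fixes lam :: complex and \<alpha> :: real
  assumes "Re lam > 0" and "\<alpha> > 0"
  shows "((\<integral>\<^sup>+ y \<in> ball (0::'a::euclidean_space) 1.
             ennreal (wgt \<alpha> y) * (L1norm (delta lam y))^2 \<partial>lborel) < \<infinity>)
         \<longleftrightarrow> \<alpha> > max (2 * Re lam - 1) 0"
proof -
  have lam: "Re lam > 0" and a0: "\<alpha> > 0" using assms by auto
  have ballm[measurable]: "ball (0::'a) r \<in> sets borel" for r by simp
  define cw where "cw = (2 * pi) powr (- real DIM('a) / 2) / Gamma \<alpha>"
  have cw: "cw > 0" unfolding cw_def using a0 by (simp add: Gamma_real_pos)
  let ?I = "(\<integral>\<^sup>+ y \<in> ball (0::'a) 1. ennreal (wgt \<alpha> y) * (L1norm (delta lam y))^2 \<partial>lborel)"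
  show ?thesis
  proof
    assume fin: "?I < \<infinity>"
    show "\<alpha> > max (2 * Re lam - 1) 0"
    proof (rule ccontr)
      assume "\<not> \<alpha> > max (2 * Re lam - 1) 0"
      then have a2: "\<alpha> \<le> 2 * Re lam - 1" using a0 by simp
      then have lam2: "Re lam > 1/2" using a0 by simp
      obtain c where c: "c > 0" and cL: "\<And>y::'a. 1/2 \<le> norm y \<and> norm y < 1 \<Longrightarrow>
           ennreal (c * (1 - norm y ^ 2) powr (1/2 - Re lam)) \<le> L1norm (delta lam y)"
        using L1_lower[OF lam2] by blast
      have "ennreal (cw * c^2) * \<infinity> = ennreal (cw * c^2) * (\<integral>\<^sup>+y. ennreal ((1 - norm y ^ 2) powr (\<alpha> - 2 * Re lam)) * indicator (ball (0::'a) 1 - ball 0 (1/2)) y \<partial>lborel)"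
        using ball_int_infinite[of "\<alpha> - 2 * Re lam", where 'a='a] a2 by simp
      also have "\<dots> = (\<integral>\<^sup>+y. ennreal (cw * c^2) * (ennreal ((1 - norm y ^ 2) powr (\<alpha> - 2 * Re lam)) * indicator (ball (0::'a) 1 - ball 0 (1/2)) y) \<partial>lborel)"
        by (rule nn_integral_cmult[symmetric]) measurable
      also have "\<dots> \<le> ?I"
      proof (intro nn_integral_mono)
        fix y :: 'a
        show "ennreal (cw * c^2) * (ennreal ((1 - norm y ^ 2) powr (\<alpha> - 2 * Re lam)) * indicator (ball (0::'a) 1 - ball 0 (1/2)) y)
            \<le> ennreal (wgt \<alpha> y) * (L1norm (delta lam y))^2 * indicator (ball 0 1) y"
        proof (cases "y \<in> ball (0::'a) 1 - ball 0 (1/2)")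
          case True
          then have y: "1/2 \<le> norm y \<and> norm y < 1" by auto
          define eps where "eps = 1 - norm y ^ 2"
          have e: "eps > 0" unfolding eps_def using y by (auto simp: abs_square_less_1)
          have L: "ennreal (c * eps powr (1/2 - Re lam)) \<le> L1norm (delta lam y)" using cL[OF y] unfolding eps_def .
          have "ennreal (cw * c^2) * ennreal (eps powr (\<alpha> - 2 * Re lam))
              = ennreal (cw * eps powr (\<alpha> - 1)) * (ennreal (c * eps powr (1/2 - Re lam)))^2"
          proof -
            have "(c * eps powr (1/2 - Re lam))^2 = c^2 * eps powr (1 - 2 * Re lam)"
              by (simp add: power2_eq_square powr_add[symmetric] algebra_simps)
            moreover have "eps powr (\<alpha> - 1) * eps powr (1 - 2 * Re lam) = eps powr (\<alpha> - 2 * Re lam)"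
              by (simp add: powr_add[symmetric])
            ultimately show ?thesis using cw c
              by (simp add: ennreal_power ennreal_mult[symmetric] mult_ac)
          qed
          also have "\<dots> \<le> ennreal (wgt \<alpha> y) * (L1norm (delta lam y))^2"
            unfolding wgt_eq cw_def[symmetric] eps_def[symmetric]
            by (intro mult_left_mono power_mono L) auto
          finally show ?thesis using True unfolding eps_def by simp
        qed simp
      qed
      finally have "ennreal (cw * c^2) * \<infinity> \<le> ?I" .
      moreover have "ennreal (cw * c^2) * \<infinity> = \<infinity>" using cw c by (simp add: ennreal_mult_top)
      ultimately show False using fin by simp
    qed
  next
    assume aa: "\<alpha> > max (2 * Re lam - 1) 0"
    define \<beta> where "\<beta> = (max (Re lam - 1/2) 0 + \<alpha> / 2) / 2"
    have b0: "\<beta> > 0" unfolding \<beta>_def using a0 by (simp add: add_nonneg_pos)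
    have bs: "Re lam - 1/2 \<le> \<beta>" unfolding \<beta>_def using aa by (simp add: max_def split: if_splits)
    have ba: "2 * \<beta> < \<alpha>" unfolding \<beta>_def using aa a0 by (simp add: max_def split: if_splits)
    obtain M where M: "M \<ge> 0" and Mup: "\<And>y::'a. norm y < 1 \<Longrightarrow> L1norm (delta lam y) \<le> ennreal (M * (1 - norm y ^ 2) powr (-\<beta>))"
      using L1_upper[OF lam b0 bs] by blast
    have "?I \<le> (\<integral>\<^sup>+y. ennreal (cw * M^2) * (ennreal ((1 - norm y ^ 2) powr (\<alpha> - 1 - 2 * \<beta>)) * indicator (ball (0::'a) 1) y) \<partial>lborel)"
    proof (intro nn_integral_mono)
      fix y :: 'a
      show "ennreal (wgt \<alpha> y) * (L1norm (delta lam y))^2 * indicator (ball 0 1) y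
          \<le> ennreal (cw * M^2) * (ennreal ((1 - norm y ^ 2) powr (\<alpha> - 1 - 2 * \<beta>)) * indicator (ball (0::'a) 1) y)"
      proof (cases "y \<in> ball (0::'a) 1")
        case True
        then have y: "norm y < 1" by simp
        define eps where "eps = 1 - norm y ^ 2"
        have e: "eps > 0" unfolding eps_def using y by (auto simp: abs_square_less_1)
        have L: "L1norm (delta lam y) \<le> ennreal (M * eps powr (-\<beta>))" using Mup[OF y] unfolding eps_def .
        have "ennreal (wgt \<alpha> y) * (L1norm (delta lam y))^2 \<le> ennreal (cw * eps powr (\<alpha> - 1)) * (ennreal (M * eps powr (-\<beta>)))^2"
          unfolding wgt_eq cw_def[symmetric] eps_def[symmetric]
          by (intro mult_left_mono power_mono L) auto
        also have "\<dots> = ennreal (cw * M^2) * ennreal (eps powr (\<alpha> - 1 - 2 * \<beta>))"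
        proof -
          have "(M * eps powr (-\<beta>))^2 = M^2 * eps powr (- 2 * \<beta>)"
            by (simp add: power2_eq_square powr_add[symmetric] algebra_simps)
          moreover have "eps powr (\<alpha> - 1) * eps powr (- 2 * \<beta>) = eps powr (\<alpha> - 1 - 2 * \<beta>)"
            by (simp add: powr_add[symmetric])
          ultimately show ?thesis using cw M
            by (simp add: ennreal_power ennreal_mult[symmetric] mult_ac)
        qed
        finally show ?thesis using True unfolding eps_def by simp
      qed simp
    qed
    also have "\<dots> = ennreal (cw * M^2) * (\<integral>\<^sup>+y. ennreal ((1 - norm y ^ 2) powr (\<alpha> - 1 - 2 * \<beta>)) * indicator (ball (0::'a) 1) y \<partial>lborel)"
      by (rule nn_integral_cmult) measurable
    also have "\<dots> < \<infinity>"
      using ball_int_finite[of "\<alpha> - 1 - 2 * \<beta>", where 'a='a] ba by (simp add: ennreal_mult_less_top)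
    finally show "?I < \<infinity>" .
  qed
qed


end
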